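(* Let $\nu>0$, $0<K<\nu^2/2$, and let $(\Phi_m)$ satisfy the standing assumptions in the context. If $W\in\mathcal{C}_K$, then $\mathcal{T}(W)\in\mathcal{C}_K$.
   Context: $A_m f(\xi):=\int_{-m/2}^{m/2} f(\xi+s)\,ds$. $\Psi_m(r):=\Phi_m(\nu m-r)-\Phi_m(\nu m)+\Phi_m'(\nu m)r$ for $r\in[0,\nu m)$. $\partial\mathcal{P}(W):=\sum_{m\ge1}A_m\Psi_m'(A_mW)$, $\mu(W):=\|W\|_2/\|\partial\mathcal{P}(W)\|_2$, and $\mathcal{T}(W):=\mu(W)\,\partial\mathcal{P}(W)$. $\mathcal{C}$ is the $\mathsf{L}^2(\mathbb{R})$-closure of $\{W\in C_c^\infty(\mathbb{R}): W(x)=W(-x)\ge0,\ \dot W(x)=-\dot W(-x)\le0\ \forall x\ge0\}$; $\mathcal{C}_K:=\{W\in\mathcal{C}:\frac12\|W\|_2^2=K\}$. Standing assumptions: for every $m$, $\Phi_m:[0,\infty)\to[0,\infty)$, $\Phi_m\in C^4([0,\infty))$, $\Phi_m\ge0,\Phi_m'\le0,\Phi_m''\ge0,\Phi_m'''\le0,\Phi_m^{(4)}\ge0$ (strict for $m=1$, $s>0$); and for a fixed $\gamma\in(5/2,3)$ the series $\sum_m\Phi_m'(\nu m-\sqrt{2Km})m$, $\sum_m\Phi_m''(\nu m-\sqrt{2Km})m^2$, $\sum_m\Phi_m''(\nu m)m^\gamma$, $\sum_m\Phi_m'''(\nu m-\sqrt{2Km})m^{3/2}$ are finite. *)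

theory Defs
  imports "HOL-Analysis.Analysis"
begin

definition L2norm :: "(real \<Rightarrow> real) \<Rightarrow> real" where
  "L2norm f = sqrt (integral\<^sup>L lborel (\<lambda>x. (f x)^2))"

definition smooth_profile :: "(real \<Rightarrow> real) \<Rightarrow> bool" where
  "smooth_profile W \<longleftrightarrow>
     (\<exists>Ds :: nat \<Rightarrow> real \<Rightarrow> real.
        Ds 0 = W \<and>
        (\<forall>k x. (Ds k has_real_derivative Ds (Suc k) x) (at x)) \<and>
        (\<exists>R. \<forall>x. R < \<bar>x\<bar> \<longrightarrow> W x = 0) \<and>
        (\<forall>x\<ge>0. W x = W (-x) \<and> W x \<ge> 0 \<and> Ds 1 x = - Ds 1 (-x) \<and> Ds 1 x \<le> 0))"

text \<open>The cone C: L2-closure of the smooth profiles (as a set of representatives).\<close>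
definition cone :: "(real \<Rightarrow> real) set" where
  "cone = {W. W \<in> borel_measurable lborel \<and> integrable lborel (\<lambda>x. (W x)^2) \<and>
              (\<exists>F :: nat \<Rightarrow> real \<Rightarrow> real. (\<forall>n. smooth_profile (F n)) \<and>
                  (\<lambda>n. L2norm (\<lambda>x. F n x - W x)) \<longlonglongrightarrow> 0)}"

definition coneK :: "real \<Rightarrow> (real \<Rightarrow> real) set" where
  "coneK K = {W \<in> cone. (1/2) * (L2norm W)^2 = K}"

definition Aop :: "nat \<Rightarrow> (real \<Rightarrow> real) \<Rightarrow> real \<Rightarrow> real" where
  "Aop m f \<xi> = set_lebesgue_integral lborel {- real m / 2 .. real m / 2} (\<lambda>s. f (\<xi> + s))"

text \<open>dPhi m k is the k-th derivative of Phi_m.  Psi_m and its derivative.\<close>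
definition Psi :: "(nat \<Rightarrow> nat \<Rightarrow> real \<Rightarrow> real) \<Rightarrow> real \<Rightarrow> nat \<Rightarrow> real \<Rightarrow> real" where
  "Psi dPhi \<nu> m r = dPhi m 0 (\<nu> * real m - r) - dPhi m 0 (\<nu> * real m) + dPhi m 1 (\<nu> * real m) * r"

definition dPsi :: "(nat \<Rightarrow> nat \<Rightarrow> real \<Rightarrow> real) \<Rightarrow> real \<Rightarrow> nat \<Rightarrow> real \<Rightarrow> real" where
  "dPsi dPhi \<nu> m r = dPhi m 1 (\<nu> * real m) - dPhi m 1 (\<nu> * real m - r)"

definition dP :: "(nat \<Rightarrow> nat \<Rightarrow> real \<Rightarrow> real) \<Rightarrow> real \<Rightarrow> (real \<Rightarrow> real) \<Rightarrow> real \<Rightarrow> real" where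
  "dP dPhi \<nu> W \<xi> = (\<Sum>n. Aop (Suc n) (\<lambda>x. dPsi dPhi \<nu> (Suc n) (Aop (Suc n) W x)) \<xi>)"

definition muW :: "(nat \<Rightarrow> nat \<Rightarrow> real \<Rightarrow> real) \<Rightarrow> real \<Rightarrow> (real \<Rightarrow> real) \<Rightarrow> real" where
  "muW dPhi \<nu> W = L2norm W / L2norm (dP dPhi \<nu> W)"

definition Top :: "(nat \<Rightarrow> nat \<Rightarrow> real \<Rightarrow> real) \<Rightarrow> real \<Rightarrow> (real \<Rightarrow> real) \<Rightarrow> real \<Rightarrow> real" where
  "Top dPhi \<nu> W = (\<lambda>\<xi>. muW dPhi \<nu> W * dP dPhi \<nu> W \<xi>)"

end

theory Submission
  imports Defs
begin

definition smooth :: "(real \<Rightarrow> real) \<Rightarrow> bool" where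
  "smooth f \<longleftrightarrow> (\<forall>k x. ((deriv ^^ k) f) differentiable (at x))"

lemma smooth_DERIV:
  assumes "smooth f"
  shows "((deriv ^^ k) f has_real_derivative (deriv ^^ (Suc k)) f x) (at x)"
  using assms unfolding smooth_def
  by (simp add: DERIV_deriv_iff_real_differentiable)

lemma smooth_by_deriv_seq:
  assumes "\<And>k x. (D k has_real_derivative D (Suc k) x) (at x)"
  shows "(deriv ^^ k) (D 0) = D k"
proof (induction k)
  case 0 then show ?case by simp
next
  case (Suc k)
  show ?case
    using Suc by (auto intro!: ext DERIV_imp_deriv assms)
qed

lemma smoothI_seq:
  assumes "\<And>k x. (D k has_real_derivative D (Suc k) x) (at x)" "f = D 0"
  shows "smooth f"
  unfolding smooth_def using smooth_by_deriv_seq[of D, OF assms(1)] assms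
  by (metis real_differentiable_def)

lemma smooth_const: "smooth (\<lambda>x. c)"
  by (rule smoothI_seq[where D="\<lambda>k. if k = 0 then (\<lambda>x. c) else (\<lambda>x. 0)"]) auto

lemma smooth_id: "smooth (\<lambda>x. x)"
  by (rule smoothI_seq[where D="\<lambda>k. if k = 0 then (\<lambda>x. x) else if k = 1 then (\<lambda>x. 1) else (\<lambda>x. 0)"])
     (auto intro!: derivative_eq_intros)

lemma smooth_seq:
  assumes "smooth f"
  obtains D where "\<And>k x. (D k has_real_derivative D (Suc k) x) (at x)" "D 0 = f"
  using that[of "\<lambda>k. (deriv ^^ k) f"] smooth_DERIV[OF assms] by simp

lemma smooth_add:
  assumes "smooth f" "smooth g" shows "smooth (\<lambda>x. f x + g x)"
proof -
  obtain D where D: "\<And>k x. (D k has_real_derivative D (Suc k) x) (at x)" "D 0 = f"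
    using smooth_seq[OF assms(1)] by blast
  obtain E where E: "\<And>k x. (E k has_real_derivative E (Suc k) x) (at x)" "E 0 = g"
    using smooth_seq[OF assms(2)] by blast
  show ?thesis
    by (rule smoothI_seq[where D="\<lambda>k x. D k x + E k x"]) (auto intro!: DERIV_add D(1) E(1) simp: D(2) E(2))
qed

lemma smooth_uminus:
  assumes "smooth f" shows "smooth (\<lambda>x. - f x)"
proof -
  obtain D where D: "\<And>k x. (D k has_real_derivative D (Suc k) x) (at x)" "D 0 = f"
    using smooth_seq[OF assms(1)] by blast
  show ?thesis
    by (rule smoothI_seq[where D="\<lambda>k x. - D k x"]) (auto intro!: DERIV_minus D(1) simp: D(2))
qed

lemma smooth_diff:
  assumes "smooth f" "smooth g" shows "smooth (\<lambda>x. f x - g x)"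
  using smooth_add[OF assms(1) smooth_uminus[OF assms(2)]] by simp

lemma smooth_shift:
  assumes "smooth f" shows "smooth (\<lambda>x. f (x + c))"
proof -
  obtain D where D: "\<And>k x. (D k has_real_derivative D (Suc k) x) (at x)" "D 0 = f"
    using smooth_seq[OF assms(1)] by blast
  show ?thesis
    by (rule smoothI_seq[where D="\<lambda>k x. D k (x + c)"]) (auto simp: DERIV_shift[symmetric] D)
qed

lemma Suc_choose': "Suc n choose k = (n choose k) + (if k = 0 then 0 else (n choose (k-1)))"
  by (cases k) simp_all

lemma sum_Suc_reindex':
  fixes f :: "nat \<Rightarrow> 'a::ab_group_add"
  shows "sum f {0..n} = f 0 - f (Suc n) + sum (\<lambda>i. f (Suc i)) {0..n}"
  by (induct n) auto

lemma smooth_mult: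
  assumes "smooth f" "smooth g" shows "smooth (\<lambda>x. f x * g x)"
proof -
  obtain D where D: "\<And>k x. (D k has_real_derivative D (Suc k) x) (at x)" "D 0 = f"
    using smooth_seq[OF assms(1)] by blast
  obtain E where E: "\<And>k x. (E k has_real_derivative E (Suc k) x) (at x)" "E 0 = g"
    using smooth_seq[OF assms(2)] by blast
  define P where "P = (\<lambda>n x. \<Sum>i = 0..n. real (n choose i) * D i x * E (n-i) x)"
  have "(P n has_real_derivative P (Suc n) x) (at x)" for n x
  proof -
    have sumeq: "(\<Sum>i = 0..n.
               real (n choose i) * (D (Suc i) x * E (n-i) x + E (Suc (n-i)) x * D i x)) =
            E 0 x * D (Suc n) x + (\<Sum>i = 0..n. D i x * (real (Suc n choose i) * E (Suc n - i) x))"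
      apply (simp add: Suc_choose' algebra_simps sum.distrib)
      apply (subst (4) sum_Suc_reindex')
      apply (auto simp: algebra_simps Suc_diff_le intro: sum.cong)
      done
    have "(P n has_real_derivative (\<Sum>i = 0..n.
               real (n choose i) * (D (Suc i) x * E (n-i) x + E (Suc (n-i)) x * D i x))) (at x)"
      unfolding P_def
      apply (rule DERIV_sum)
      apply (rule derivative_eq_intros D E refl | simp)+
      apply (simp add: algebra_simps Suc_diff_le)
      done
    moreover have "(\<Sum>i = 0..n.
               real (n choose i) * (D (Suc i) x * E (n-i) x + E (Suc (n-i)) x * D i x)) = P (Suc n) x"
      unfolding sumeq P_def
      by (simp add: sum.atLeast0_atMost_Suc_shift algebra_simps)
    ultimately show ?thesis by simp
  qed
  moreover have "(\<lambda>x. f x * g x) = P 0" using D E by (auto simp: P_def)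
  ultimately show ?thesis by (rule smoothI_seq)
qed

lemma smooth_cmult:
  assumes "smooth f" shows "smooth (\<lambda>x. c * f x)"
  using smooth_mult[OF smooth_const assms] .

lemma smooth_power:
  assumes "smooth f" shows "smooth (\<lambda>x. f x ^ n)"
  by (induction n) (auto intro: smooth_const smooth_mult assms)

lemma smooth_sum:
  assumes "\<And>i. i \<in> S \<Longrightarrow> smooth (f i)" shows "smooth (\<lambda>x. \<Sum>i\<in>S. f i x)"
  using assms
proof (induction S rule: infinite_finite_induct)
  case (infinite A) then show ?case by (simp add: smooth_const)
next
  case empty then show ?case by (simp add: smooth_const)
next
  case (insert x F) then show ?case by (auto intro!: smooth_add)
qed

lemma smooth_poly:
  assumes "smooth g" shows "smooth (\<lambda>x. \<Sum>i\<le>n. a i * g x ^ i)"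
  by (intro smooth_sum smooth_cmult smooth_power assms)

lemma smooth_differentiable: "smooth f \<Longrightarrow> f differentiable (at x)"
  unfolding smooth_def by (metis funpow_0)

lemma smooth_deriv_smooth: "smooth f \<Longrightarrow> smooth (deriv f)"
  unfolding smooth_def by (metis comp_apply funpow_Suc_right)

lemma smooth_from_deriv:
  assumes "\<And>x. (f has_real_derivative g x) (at x)" "smooth g"
  shows "smooth f"
proof -
  obtain E where E: "\<And>k x. (E k has_real_derivative E (Suc k) x) (at x)" "E 0 = g"
    using smooth_seq[OF assms(2)] by blast
  show ?thesis
  proof (rule smoothI_seq[where D="\<lambda>k. if k = 0 then f else E (k - 1)"])
    fix k x show "((if k = 0 then f else E (k - 1)) has_real_derivative (if Suc k = 0 then f else E (Suc k - 1)) x) (at x)"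
      by (cases k) (auto simp: assms E)
  qed simp
qed

lemma smooth_profile_iff:
  "smooth_profile W \<longleftrightarrow> smooth W \<and> (\<exists>R. \<forall>x. R < \<bar>x\<bar> \<longrightarrow> W x = 0) \<and>
     (\<forall>x\<ge>0. W x = W (-x) \<and> W x \<ge> 0 \<and> deriv W x = - deriv W (-x) \<and> deriv W x \<le> 0)"
proof
  assume "smooth_profile W"
  then obtain Ds where Ds: "Ds 0 = W" "\<And>k x. (Ds k has_real_derivative Ds (Suc k) x) (at x)"
    "\<exists>R. \<forall>x. R < \<bar>x\<bar> \<longrightarrow> W x = 0"
    "\<forall>x\<ge>0. W x = W (-x) \<and> W x \<ge> 0 \<and> Ds 1 x = - Ds 1 (-x) \<and> Ds 1 x \<le> 0"
    unfolding smooth_profile_def by blast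
  have sm: "smooth W" using smoothI_seq[of Ds W] Ds by simp
  have "deriv W x = Ds 1 x" for x
    using Ds(2)[of 0 x] Ds(1) by (simp add: DERIV_imp_deriv)
  then have d: "deriv W = Ds 1" by auto
  show "smooth W \<and> (\<exists>R. \<forall>x. R < \<bar>x\<bar> \<longrightarrow> W x = 0) \<and>
     (\<forall>x\<ge>0. W x = W (-x) \<and> W x \<ge> 0 \<and> deriv W x = - deriv W (-x) \<and> deriv W x \<le> 0)"
    unfolding d using sm Ds(3,4) by blast
next
  assume H: "smooth W \<and> (\<exists>R. \<forall>x. R < \<bar>x\<bar> \<longrightarrow> W x = 0) \<and>
     (\<forall>x\<ge>0. W x = W (-x) \<and> W x \<ge> 0 \<and> deriv W x = - deriv W (-x) \<and> deriv W x \<le> 0)"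
  show "smooth_profile W"
    unfolding smooth_profile_def
  proof (rule exI[where x="\<lambda>k. (deriv ^^ k) W"])
    have e1: "(deriv ^^ 1) W = deriv W" by simp
    have e0: "(deriv ^^ 0) W = W" by simp
    have s: "\<And>k x. ((deriv ^^ k) W has_real_derivative (deriv ^^ (Suc k)) W x) (at x)"
      using H smooth_DERIV[of W] by blast
    show "(deriv ^^ 0) W = W \<and>
    (\<forall>k x. ((deriv ^^ k) W has_real_derivative (deriv ^^ Suc k) W x) (at x)) \<and>
    (\<exists>R. \<forall>x. R < \<bar>x\<bar> \<longrightarrow> W x = 0) \<and>
    (\<forall>x\<ge>0. W x = W (- x) \<and> 0 \<le> W x \<and> (deriv ^^ 1) W x = - (deriv ^^ 1) W (- x) \<and> (deriv ^^ 1) W x \<le> 0)"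
      unfolding e0 e1 using H s by blast
  qed
qed

lemma smooth_profile_even: "smooth_profile W \<Longrightarrow> W (-x) = W x"
proof -
  assume "smooth_profile W"
  then have H: "\<And>x. x \<ge> 0 \<Longrightarrow> W x = W (-x)" unfolding smooth_profile_iff by blast
  show ?thesis
  proof (cases "x \<ge> 0")
    case True then show ?thesis using H[of x] by simp
  next
    case False then show ?thesis using H[of "-x"] by simp
  qed
qed

lemma smooth_profile_nonneg: "smooth_profile W \<Longrightarrow> W x \<ge> 0"
proof -
  assume a: "smooth_profile W"
  then have H: "\<And>x. x \<ge> 0 \<Longrightarrow> W x \<ge> 0" unfolding smooth_profile_iff by blast
  show ?thesis
  proof (cases "x \<ge> 0")
    case True then show ?thesis using H[of x] by simp
  next
    case False then show ?thesis using H[of "-x"] smooth_profile_even[OF a, of x] by simp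
  qed
qed

lemma smooth_continuous: "smooth f \<Longrightarrow> continuous_on S f"
  by (meson continuous_at_imp_continuous_on differentiable_imp_continuous_within smooth_differentiable)

definition L2 :: "(real \<Rightarrow> real) \<Rightarrow> bool" where
  "L2 f \<longleftrightarrow> f \<in> borel_measurable lborel \<and> integrable lborel (\<lambda>x. (f x)^2)"

lemma L2norm_sq: "(L2norm f)^2 = integral\<^sup>L lborel (\<lambda>x. (f x)^2)"
  unfolding L2norm_def by (simp add: integral_nonneg_AE)

lemma L2norm_nonneg: "0 \<le> L2norm f"
  unfolding L2norm_def by simp

lemma L2_integrable_mult:
  assumes "L2 f" "L2 g" shows "integrable lborel (\<lambda>x. f x * g x)"
proof (rule Bochner_Integration.integrable_bound)
  show "integrable lborel (\<lambda>x. (f x)^2 + (g x)^2)" using assms unfolding L2_def by auto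
  show "(\<lambda>x. f x * g x) \<in> borel_measurable lborel" using assms unfolding L2_def by auto
  show "AE x in lborel. norm (f x * g x) \<le> norm ((f x)^2 + (g x)^2)"
  proof (rule AE_I2)
    fix x
    have "0 \<le> (\<bar>f x\<bar> - \<bar>g x\<bar>)^2" by simp
    then have "2 * \<bar>f x * g x\<bar> \<le> (f x)^2 + (g x)^2"
      by (simp add: power2_eq_square algebra_simps abs_mult)
    then show "norm (f x * g x) \<le> norm ((f x)^2 + (g x)^2)" by simp
  qed
qed

lemma L2_add: "L2 f \<Longrightarrow> L2 g \<Longrightarrow> L2 (\<lambda>x. f x + g x)"
proof -
  assume a: "L2 f" "L2 g"
  have "integrable lborel (\<lambda>x. (f x)^2 + 2 * (f x * g x) + (g x)^2)"
    using a L2_integrable_mult[OF a] unfolding L2_def by auto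
  then show ?thesis using a unfolding L2_def by (simp add: power2_sum algebra_simps borel_measurable_add)
qed

lemma L2_cmult: "L2 f \<Longrightarrow> L2 (\<lambda>x. c * f x)"
  unfolding L2_def by (simp add: power_mult_distrib borel_measurable_times)

lemma L2_uminus: "L2 f \<Longrightarrow> L2 (\<lambda>x. - f x)"
  using L2_cmult[where c="-1"] by simp

lemma L2_diff: "L2 f \<Longrightarrow> L2 g \<Longrightarrow> L2 (\<lambda>x. f x - g x)"
  using L2_add[of f "\<lambda>x. - g x"] L2_uminus by simp

lemma L2_Cauchy_Schwarz:
  assumes "L2 f" "L2 g"
  shows "integral\<^sup>L lborel (\<lambda>x. f x * g x) \<le> L2norm f * L2norm g"
proof -
  define a where "a = integral\<^sup>L lborel (\<lambda>x. (f x)^2)"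
  define b where "b = integral\<^sup>L lborel (\<lambda>x. (g x)^2)"
  define p where "p = integral\<^sup>L lborel (\<lambda>x. f x * g x)"
  have ia: "integrable lborel (\<lambda>x. (f x)^2)" "integrable lborel (\<lambda>x. (g x)^2)"
    using assms unfolding L2_def by auto
  have ip: "integrable lborel (\<lambda>x. f x * g x)" using L2_integrable_mult[OF assms] .
  have q: "0 \<le> t^2 * a - 2 * t * p + b" for t
  proof -
    have "0 \<le> integral\<^sup>L lborel (\<lambda>x. (t * f x - g x)^2)"
      by (simp add: integral_nonneg_AE)
    also have "(\<lambda>x. (t * f x - g x)^2) = (\<lambda>x. t^2 * (f x)^2 - (2 * t) * (f x * g x) + (g x)^2)"
      by (auto simp: power2_eq_square algebra_simps)
    also have "integral\<^sup>L lborel \<dots> = t^2 * a - 2 * t * p + b"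
      using ia ip unfolding a_def b_def p_def by (simp)
    finally show ?thesis .
  qed
  have a0: "a \<ge> 0" "b \<ge> 0" unfolding a_def b_def by (simp_all add: integral_nonneg_AE)
  have "p^2 \<le> a * b"
  proof (cases "a = 0")
    case True
    have "p = 0"
    proof (rule ccontr)
      assume "p \<noteq> 0"
      then show False using q[of "(b+1)/(2*p)"] True by (simp add: field_simps)
    qed
    then show ?thesis using True by simp
  next
    case False
    then have "a > 0" using a0 by simp
    have "0 \<le> (p/a)^2 * a - 2 * (p/a) * p + b" by (rule q)
    also have "\<dots> = (a * b - p^2) / a" using \<open>a > 0\<close> by (simp add: field_simps power2_eq_square)
    finally show ?thesis using \<open>a > 0\<close> by (simp add: zero_le_divide_iff)
  qed
  then have "\<bar>p\<bar> \<le> sqrt (a * b)" using real_le_rsqrt[of "\<bar>p\<bar>" "a*b"] by simp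
  then show ?thesis unfolding L2norm_def a_def b_def p_def by (simp add: real_sqrt_mult)
qed

lemma L2norm_triangle:
  assumes "L2 f" "L2 g"
  shows "L2norm (\<lambda>x. f x + g x) \<le> L2norm f + L2norm g"
proof -
  have ia: "integrable lborel (\<lambda>x. (f x)^2)" "integrable lborel (\<lambda>x. (g x)^2)"
    using assms unfolding L2_def by auto
  have ip: "integrable lborel (\<lambda>x. f x * g x)" using L2_integrable_mult[OF assms] .
  have "(L2norm (\<lambda>x. f x + g x))^2 = integral\<^sup>L lborel (\<lambda>x. (f x)^2 + 2 * (f x * g x) + (g x)^2)"
    unfolding L2norm_sq by (simp add: power2_sum algebra_simps)
  also have "\<dots> = (L2norm f)^2 + 2 * integral\<^sup>L lborel (\<lambda>x. f x * g x) + (L2norm g)^2"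
    using ia ip unfolding L2norm_sq by simp
  also have "\<dots> \<le> (L2norm f)^2 + 2 * (L2norm f * L2norm g) + (L2norm g)^2"
    using L2_Cauchy_Schwarz[OF assms] by simp
  also have "\<dots> = (L2norm f + L2norm g)^2" by (simp add: power2_sum)
  finally show ?thesis
    using L2norm_nonneg[of f] L2norm_nonneg[of g] by (meson add_nonneg_nonneg power2_le_imp_le)
qed

lemma L2norm_cmult: "L2norm (\<lambda>x. c * f x) = \<bar>c\<bar> * L2norm f"
  unfolding L2norm_def by (simp add: power_mult_distrib real_sqrt_mult)

lemma L2norm_uminus: "L2norm (\<lambda>x. - f x) = L2norm f"
  unfolding L2norm_def by simp

lemma L2norm_diff_commute: "L2norm (\<lambda>x. f x - g x) = L2norm (\<lambda>x. g x - f x)"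
  unfolding L2norm_def by (simp add: power2_commute)

lemma L2norm_triangle_diff:
  assumes "L2 f" "L2 g" "L2 h"
  shows "L2norm (\<lambda>x. f x - h x) \<le> L2norm (\<lambda>x. f x - g x) + L2norm (\<lambda>x. g x - h x)"
  using L2norm_triangle[OF L2_diff[OF assms(1,2)] L2_diff[OF assms(2,3)]] by simp

lemma L2norm_mono:
  assumes "f \<in> borel_measurable lborel" "L2 g" "AE x in lborel. \<bar>f x\<bar> \<le> \<bar>g x\<bar>"
  shows "L2 f" "L2norm f \<le> L2norm g"
proof -
  have ig: "integrable lborel (\<lambda>x. (g x)^2)" using assms unfolding L2_def by auto
  have le: "AE x in lborel. (f x)^2 \<le> (g x)^2"
    using assms(3) by eventually_elim (simp add: abs_le_square_iff)
  have "integrable lborel (\<lambda>x. (f x)^2)"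
    by (rule Bochner_Integration.integrable_bound[OF ig]) (use assms(1) le in auto)
  then show "L2 f" using assms unfolding L2_def by auto
  show "L2norm f \<le> L2norm g"
    unfolding L2norm_def
    by (intro real_sqrt_le_mono integral_mono_AE \<open>integrable lborel (\<lambda>x. (f x)^2)\<close> ig le)
qed

lemma L2norm_AE_cong:
  assumes "AE x in lborel. f x = g x" "f \<in> borel_measurable lborel" "g \<in> borel_measurable lborel" shows "L2norm f = L2norm g"
proof -
  have "integral\<^sup>L lborel (\<lambda>x. (f x)^2) = integral\<^sup>L lborel (\<lambda>x. (g x)^2)"
    by (rule integral_cong_AE) (use assms in \<open>auto simp: borel_measurable_power\<close>)
  then show ?thesis unfolding L2norm_def by simp
qed

lemma L2norm_eq_0:
  assumes "L2 f" "L2norm f = 0" shows "AE x in lborel. f x = 0"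
proof -
  have "integral\<^sup>L lborel (\<lambda>x. (f x)^2) = 0" using assms(2) L2norm_sq[of f] by simp
  then have "AE x in lborel. (f x)^2 = 0"
    using assms(1) unfolding L2_def by (subst (asm) integral_nonneg_eq_0_iff_AE) auto
  then show ?thesis by eventually_elim simp
qed

lemma L2_bounded_support:
  assumes "f \<in> borel_measurable lborel" "\<And>x. \<bar>f x\<bar> \<le> B" "\<And>x. R < \<bar>x\<bar> \<Longrightarrow> f x = 0" "0 \<le> R"
  shows "L2 f" "L2norm f \<le> B * sqrt (2 * R)"
proof -
  have B0: "0 \<le> B" using assms(2)[of 0] by simp
  have ib: "integrable lborel (\<lambda>x. indicator {-R..R} x * B^2)"
    by (intro integrable_mult_left integrable_real_indicator) (use assms(4) in \<open>auto simp: emeasure_lborel_Icc\<close>)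
  have le: "\<bar>f x\<bar> \<le> \<bar>indicator {-R..R} x * B\<bar>" for x
    using assms(2,3)[of x] B0 by (cases "R < \<bar>x\<bar>") (auto split: split_indicator)
  have ind2: "(indicator {-R..R} x * B)^2 = indicator {-R..R} x * B^2" for x :: real
    by (simp split: split_indicator)
  have L: "L2 (\<lambda>x. indicator {-R..R} x * B)"
    unfolding L2_def ind2 using ib by (simp add: borel_measurable_times)
  show "L2 f" using L2norm_mono[OF assms(1) L] le by auto
  have "L2norm f \<le> L2norm (\<lambda>x. indicator {-R..R} x * B)"
    using L2norm_mono[OF assms(1) L] le by auto
  also have "\<dots> = B * sqrt (2 * R)"
  proof -
    have e: "(\<lambda>x. (indicator {-R..R} x * B)^2) = (\<lambda>x. B^2 * indicator {-R..R} x)"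
      by (auto simp: ind2 mult.commute power_mult_distrib split: split_indicator)
    have "integral\<^sup>L lborel (\<lambda>x. B^2 * indicator {-R..R} x) = B^2 * (2 * R)"
      using assms(4) by (simp add: measure_lborel_Icc)
    then show ?thesis unfolding L2norm_def e using B0 assms(4) by (simp add: real_sqrt_mult)
  qed
  finally show "L2norm f \<le> B * sqrt (2 * R)" .
qed

lemma smooth_profile_L2:
  assumes "smooth_profile W" shows "L2 W"
proof -
  obtain R where R: "\<And>x. R < \<bar>x\<bar> \<Longrightarrow> W x = 0" and sm: "smooth W"
    using assms unfolding smooth_profile_iff by blast
  define R' where "R' = max R 0"
  have R': "\<And>x. R' < \<bar>x\<bar> \<Longrightarrow> W x = 0" "0 \<le> R'" using R unfolding R'_def by auto
  have "compact {-R'..R'}" by simp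
  then obtain B where B: "\<And>x. x \<in> {-R'..R'} \<Longrightarrow> \<bar>W x\<bar> \<le> B"
    using compact_imp_bounded[OF compact_continuous_image[OF smooth_continuous[OF sm]]]
    unfolding bounded_iff by (metis image_eqI real_norm_def)
  have B': "\<bar>W x\<bar> \<le> max B 0" for x
    using B[of x] R'(1)[of x] by (cases "R' < \<bar>x\<bar>") (auto simp: abs_if split: if_splits)
  have "W \<in> borel_measurable lborel"
    using smooth_continuous[OF sm, of UNIV] by (simp add: borel_measurable_continuous_onI)
  then show ?thesis using L2_bounded_support(1)[OF _ B' R'] by simp
qed

lemma smooth_profile_zero: "smooth_profile (\<lambda>x. 0)"
  unfolding smooth_profile_iff using smooth_const[of 0] by simp

lemma smooth_profile_add:
  assumes "smooth_profile f" "smooth_profile g"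
  shows "smooth_profile (\<lambda>x. f x + g x)"
proof -
  obtain R1 where R1: "\<And>x. R1 < \<bar>x\<bar> \<Longrightarrow> f x = 0" and sf: "smooth f"
    and Hf: "\<forall>x\<ge>0. f x = f (-x) \<and> f x \<ge> 0 \<and> deriv f x = - deriv f (-x) \<and> deriv f x \<le> 0"
    using assms(1) unfolding smooth_profile_iff by blast
  obtain R2 where R2: "\<And>x. R2 < \<bar>x\<bar> \<Longrightarrow> g x = 0" and sg: "smooth g"
    and Hg: "\<forall>x\<ge>0. g x = g (-x) \<and> g x \<ge> 0 \<and> deriv g x = - deriv g (-x) \<and> deriv g x \<le> 0"
    using assms(2) unfolding smooth_profile_iff by blast
  have d: "deriv (\<lambda>x. f x + g x) x = deriv f x + deriv g x" for x
    using smooth_differentiable[OF sf] smooth_differentiable[OF sg]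
    by (intro DERIV_imp_deriv DERIV_add) (simp_all add: DERIV_deriv_iff_real_differentiable)
  show ?thesis
    unfolding smooth_profile_iff d
  proof (intro conjI)
    show "smooth (\<lambda>x. f x + g x)" using smooth_add[OF sf sg] .
    show "\<exists>R. \<forall>x. R < \<bar>x\<bar> \<longrightarrow> f x + g x = 0"
      by (rule exI[of _ "max R1 R2"]) (simp add: R1 R2)
    show "\<forall>x\<ge>0. f x + g x = f (- x) + g (- x) \<and> 0 \<le> f x + g x \<and>
        deriv f x + deriv g x = - (deriv f (- x) + deriv g (- x)) \<and> deriv f x + deriv g x \<le> 0"
    proof (intro allI impI)
      fix x :: real assume x: "x \<ge> 0"
      have h: "f x = f (-x)" "f x \<ge> 0" "deriv f x = - deriv f (-x)" "deriv f x \<le> 0"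
        using Hf x by blast+
      have k: "g x = g (-x)" "g x \<ge> 0" "deriv g x = - deriv g (-x)" "deriv g x \<le> 0"
        using Hg x by blast+
      show "f x + g x = f (- x) + g (- x) \<and> 0 \<le> f x + g x \<and>
        deriv f x + deriv g x = - (deriv f (- x) + deriv g (- x)) \<and> deriv f x + deriv g x \<le> 0"
        using h k by linarith
    qed
  qed
qed

lemma smooth_profile_cmult:
  assumes "smooth_profile f" "0 \<le> c"
  shows "smooth_profile (\<lambda>x. c * f x)"
proof -
  obtain R1 where R1: "\<And>x. R1 < \<bar>x\<bar> \<Longrightarrow> f x = 0" and sf: "smooth f"
    and Hf: "\<forall>x\<ge>0. f x = f (-x) \<and> f x \<ge> 0 \<and> deriv f x = - deriv f (-x) \<and> deriv f x \<le> 0"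
    using assms(1) unfolding smooth_profile_iff by blast
  have d: "deriv (\<lambda>x. c * f x) x = c * deriv f x" for x
    using smooth_differentiable[OF sf]
    by (intro DERIV_imp_deriv DERIV_cmult) (simp_all add: DERIV_deriv_iff_real_differentiable)
  show ?thesis
    unfolding smooth_profile_iff d
  proof (intro conjI)
    show "smooth (\<lambda>x. c * f x)" using smooth_cmult[OF sf] .
    show "\<exists>R. \<forall>x. R < \<bar>x\<bar> \<longrightarrow> c * f x = 0"
      by (rule exI[of _ R1]) (simp add: R1)
    show "\<forall>x\<ge>0. c * f x = c * f (- x) \<and> 0 \<le> c * f x \<and>
        c * deriv f x = - (c * deriv f (- x)) \<and> c * deriv f x \<le> 0"
    proof (intro allI impI)
      fix x :: real assume x: "x \<ge> 0"
      have h: "f x = f (-x)" "f x \<ge> 0" "deriv f x = - deriv f (-x)" "deriv f x \<le> 0"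
        using Hf x by blast+
      show "c * f x = c * f (- x) \<and> 0 \<le> c * f x \<and>
        c * deriv f x = - (c * deriv f (- x)) \<and> c * deriv f x \<le> 0"
        using h assms(2) by (simp add: mult_nonneg_nonpos)
    qed
  qed
qed

lemma cone_L2: "W \<in> cone \<Longrightarrow> L2 W"
  unfolding cone_def L2_def by auto

lemma smooth_profile_cone: "smooth_profile f \<Longrightarrow> f \<in> cone"
  unfolding cone_def using smooth_profile_L2[of f]
  by (auto simp: L2_def L2norm_def intro!: exI[of _ "\<lambda>n. f"])

lemma cone_approx:
  assumes "g \<in> cone" "e > 0"
  obtains F where "smooth_profile F" "L2norm (\<lambda>x. F x - g x) < e"
proof -
  obtain F where F: "\<And>n. smooth_profile (F n)" "(\<lambda>n. L2norm (\<lambda>x. F n x - g x)) \<longlonglongrightarrow> 0"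
    using assms unfolding cone_def by blast
  from order_tendstoD(2)[OF F(2) assms(2)] obtain n where "L2norm (\<lambda>x. F n x - g x) < e"
    by (meson eventually_sequentially order.refl)
  then show ?thesis using that F(1) by blast
qed

lemma cone_closed:
  assumes "L2 f" "\<And>e. e > 0 \<Longrightarrow> \<exists>g\<in>cone. L2norm (\<lambda>x. g x - f x) < e"
  shows "f \<in> cone"
proof -
  have "\<forall>n. \<exists>F. smooth_profile F \<and> L2norm (\<lambda>x. F x - f x) < 1 / (real n + 1)"
  proof
    fix n
    define e where "e = 1 / (real n + 1)"
    have e: "e > 0" unfolding e_def by simp
    obtain g where g: "g \<in> cone" "L2norm (\<lambda>x. g x - f x) < e/2" using assms(2)[of "e/2"] e by auto
    obtain F where F: "smooth_profile F" "L2norm (\<lambda>x. F x - g x) < e/2"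
      using cone_approx[OF g(1), of "e/2"] e by auto
    have "L2norm (\<lambda>x. F x - f x) \<le> L2norm (\<lambda>x. F x - g x) + L2norm (\<lambda>x. g x - f x)"
      by (rule L2norm_triangle_diff) (use F g assms smooth_profile_L2 cone_L2 in auto)
    then have "L2norm (\<lambda>x. F x - f x) < e" using F g by simp
    then show "\<exists>F. smooth_profile F \<and> L2norm (\<lambda>x. F x - f x) < 1 / (real n + 1)"
      using F unfolding e_def by blast
  qed
  then obtain F where F: "\<And>n. smooth_profile (F n)" "\<And>n. L2norm (\<lambda>x. F n x - f x) < 1 / (real n + 1)"
    by metis
  have "(\<lambda>n. L2norm (\<lambda>x. F n x - f x)) \<longlonglongrightarrow> 0"
  proof (rule tendsto_sandwich[where f="\<lambda>n. 0" and h="\<lambda>n. 1 / (real n + 1)"])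
    show "\<forall>\<^sub>F n in sequentially. 0 \<le> L2norm (\<lambda>x. F n x - f x)" by (simp add: L2norm_nonneg)
    show "\<forall>\<^sub>F n in sequentially. L2norm (\<lambda>x. F n x - f x) \<le> 1 / (real n + 1)"
      using F(2) by (simp add: less_imp_le)
    show "(\<lambda>n. 1 / (real n + 1)) \<longlonglongrightarrow> 0" using LIMSEQ_inverse_real_of_nat
      by (simp add: inverse_eq_divide add.commute)
  qed simp
  then show ?thesis using assms(1) F(1) unfolding cone_def L2_def by blast
qed

lemma cone_add:
  assumes "f \<in> cone" "g \<in> cone"
  shows "(\<lambda>x. f x + g x) \<in> cone"
proof (rule cone_closed)
  show "L2 (\<lambda>x. f x + g x)" using assms cone_L2 L2_add by blast
  fix e :: real assume e: "e > 0"
  obtain F where F: "smooth_profile F" "L2norm (\<lambda>x. F x - f x) < e/2"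
    using cone_approx[OF assms(1), of "e/2"] e by auto
  obtain G where G: "smooth_profile G" "L2norm (\<lambda>x. G x - g x) < e/2"
    using cone_approx[OF assms(2), of "e/2"] e by auto
  have "L2norm (\<lambda>x. (F x + G x) - (f x + g x)) = L2norm (\<lambda>x. (F x - f x) + (G x - g x))"
    by (simp add: algebra_simps)
  also have "\<dots> \<le> L2norm (\<lambda>x. F x - f x) + L2norm (\<lambda>x. G x - g x)"
    by (rule L2norm_triangle)
       (use F G assms smooth_profile_L2 cone_L2 L2_diff in auto)
  finally have "L2norm (\<lambda>x. (F x + G x) - (f x + g x)) < e" using F G by simp
  then show "\<exists>h\<in>cone. L2norm (\<lambda>x. h x - (f x + g x)) < e"
    using smooth_profile_cone[OF smooth_profile_add[OF F(1) G(1)]]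
    by (intro bexI[where x="\<lambda>x. F x + G x"]) auto
qed

lemma cone_cmult:
  assumes "f \<in> cone" "0 \<le> c"
  shows "(\<lambda>x. c * f x) \<in> cone"
proof (rule cone_closed)
  show "L2 (\<lambda>x. c * f x)" using assms cone_L2 L2_cmult by blast
  fix e :: real assume e: "e > 0"
  obtain F where F: "smooth_profile F" "L2norm (\<lambda>x. F x - f x) < e/(c+1)"
    using cone_approx[OF assms(1), of "e/(c+1)"] e assms(2) by auto
  have "L2norm (\<lambda>x. c * F x - c * f x) = c * L2norm (\<lambda>x. F x - f x)"
    using L2norm_cmult[of c "\<lambda>x. F x - f x"] assms(2) by (simp add: algebra_simps)
  also have "\<dots> \<le> c * (e/(c+1))" using mult_left_mono[OF less_imp_le[OF F(2)] assms(2)] .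
  also have "\<dots> < e" using e assms(2) by (simp add: field_simps)
  finally show "\<exists>h\<in>cone. L2norm (\<lambda>x. h x - c * f x) < e"
    using smooth_profile_cone[OF smooth_profile_cmult[OF F(1) assms(2)]]
    by (intro bexI[where x="\<lambda>x. c * F x"]) auto
qed

lemma cone_zero: "(\<lambda>x. 0) \<in> cone"
  using smooth_profile_cone[OF smooth_profile_zero] .

lemma cone_sum:
  assumes "\<And>i. i \<in> S \<Longrightarrow> f i \<in> cone"
  shows "(\<lambda>x. \<Sum>i\<in>S. f i x) \<in> cone"
  using assms
proof (induction S rule: infinite_finite_induct)
  case (infinite A) then show ?case by (simp add: cone_zero)
next
  case empty then show ?case by (simp add: cone_zero)
next
  case (insert x F) then show ?case by (auto intro!: cone_add)
qed

lemma cone_nonneg: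
  assumes "f \<in> cone" shows "AE x in lborel. f x \<ge> 0"
proof -
  define fm where "fm = (\<lambda>x. min (f x) 0)"
  have L: "L2 f" using cone_L2[OF assms] .
  have fmm: "fm \<in> borel_measurable lborel" using L unfolding fm_def L2_def by auto
  have "L2norm fm \<le> e" if e: "e > 0" for e
  proof -
    obtain F where F: "smooth_profile F" "L2norm (\<lambda>x. F x - f x) < e"
      using cone_approx[OF assms e] by blast
    have "\<bar>fm x\<bar> \<le> \<bar>F x - f x\<bar>" for x
      using smooth_profile_nonneg[OF F(1), of x] unfolding fm_def by auto
    then have "L2norm fm \<le> L2norm (\<lambda>x. F x - f x)"
      using L2norm_mono(2)[OF fmm L2_diff[OF smooth_profile_L2[OF F(1)] L]] by auto
    then show ?thesis using F(2) by simp
  qed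
  then have "L2norm fm \<le> 0" by (meson dense_ge)
  then have "L2norm fm = 0" using L2norm_nonneg[of fm] by simp
  moreover have "L2 fm"
    using L2norm_mono(1)[OF fmm L] unfolding fm_def by auto
  ultimately have "AE x in lborel. fm x = 0" using L2norm_eq_0 by blast
  then show ?thesis unfolding fm_def by eventually_elim (simp add: min_def split: if_splits)
qed

lemma L2_meas: "L2 f \<Longrightarrow> f \<in> borel_measurable borel"
  unfolding L2_def by simp

lemma L2_shift:
  assumes "L2 f"
  shows "L2 (\<lambda>s. f (t + s))" "L2norm (\<lambda>s. f (t + s)) = L2norm f"
proof -
  have [measurable]: "f \<in> borel_measurable borel" using L2_meas[OF assms] .
  have i: "integrable lborel (\<lambda>x. (f x)^2)" using assms unfolding L2_def by simp
  have "integrable lborel (\<lambda>x. (f (t + 1 * x))^2)"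
    using lborel_integrable_real_affine[OF i, of 1 t] by simp
  then show "L2 (\<lambda>s. f (t + s))" unfolding L2_def by simp
  show "L2norm (\<lambda>s. f (t + s)) = L2norm f"
    unfolding L2norm_def using lborel_integral_real_affine[of 1 "\<lambda>x. (f x)^2" t] by simp
qed

lemma L2_set_integrable:
  assumes "L2 g" shows "set_integrable lborel {a..b} g"
  unfolding set_integrable_def
proof (rule Bochner_Integration.integrable_bound)
  show "integrable lborel (\<lambda>x. indicator {a..b} x + (g x)^2)"
    using assms unfolding L2_def
    using emeasure_compact_finite[of "{a..b}"]
    by (intro Bochner_Integration.integrable_add integrable_real_indicator) auto
  show "(\<lambda>x. indicat_real {a..b} x *\<^sub>R g x) \<in> borel_measurable lborel"
    using assms unfolding L2_def by (auto intro!: borel_measurable_times)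
  show "AE x in lborel. norm (indicat_real {a..b} x *\<^sub>R g x) \<le> norm (indicator {a..b} x + (g x)^2)"
  proof (rule AE_I2)
    fix x
    have "\<bar>g x\<bar> \<le> 1 + (g x)^2"
    proof (cases "\<bar>g x\<bar> \<le> 1")
      case True then show ?thesis using zero_le_power2[of "g x"] by linarith
    next
      case False
      have "\<bar>g x\<bar> * 1 \<le> \<bar>g x\<bar> * \<bar>g x\<bar>" by (rule mult_left_mono) (use False in auto)
      then have "\<bar>g x\<bar> \<le> (g x)^2" by (simp add: power2_eq_square)
      then show ?thesis by linarith
    qed
    then show "norm (indicat_real {a..b} x *\<^sub>R g x) \<le> norm (indicator {a..b} x + (g x)^2)"
      by (auto split: split_indicator)
  qed
qed

lemma L2_CS_interval:
  assumes "L2 g" "a \<le> b"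
  shows "(set_lebesgue_integral lborel {a..b} g)^2 \<le> (b - a) * integral\<^sup>L lborel (\<lambda>x. indicator {a..b} x * (g x)^2)"
proof -
  define u where "u = (\<lambda>x. indicator {a..b} x :: real)"
  define v where "v = (\<lambda>x. indicator {a..b} x * g x)"
  have u2: "(\<lambda>x. (u x)^2) = u" unfolding u_def by (auto split: split_indicator)
  have v2: "(\<lambda>x. (v x)^2) = (\<lambda>x. indicator {a..b} x * (g x)^2)" unfolding v_def
    by (auto split: split_indicator)
  have Lu: "L2 u" unfolding L2_def u2 unfolding u_def
    using assms(2) by (auto simp: emeasure_lborel_Icc)
  have Lv: "L2 v"
  proof -
    have "AE x in lborel. \<bar>v x\<bar> \<le> \<bar>g x\<bar>" unfolding v_def by (auto split: split_indicator)
    moreover have "v \<in> borel_measurable lborel" using assms(1) unfolding v_def L2_def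
      by (auto intro!: borel_measurable_times)
    ultimately show ?thesis using L2norm_mono(1)[OF _ assms(1)] by blast
  qed
  have Lmv: "L2 (\<lambda>x. - v x)" using L2_uminus[OF Lv] .
  define p where "p = set_lebesgue_integral lborel {a..b} g"
  have p: "p = integral\<^sup>L lborel (\<lambda>x. u x * v x)"
    unfolding p_def set_lebesgue_integral_def u_def v_def
    by (intro Bochner_Integration.integral_cong) (auto split: split_indicator)
  have nu: "L2norm u = sqrt (b - a)" unfolding L2norm_def u2 unfolding u_def using assms(2) by simp
  have nv: "L2norm v = sqrt (integral\<^sup>L lborel (\<lambda>x. indicator {a..b} x * (g x)^2))"
    unfolding L2norm_def v2 ..
  have "p \<le> L2norm u * L2norm v" unfolding p using L2_Cauchy_Schwarz[OF Lu Lv] .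
  moreover have "-p \<le> L2norm u * L2norm (\<lambda>x. - v x)" unfolding p using L2_Cauchy_Schwarz[OF Lu Lmv] by simp
  ultimately have "\<bar>p\<bar> \<le> L2norm u * L2norm v" by (simp add: L2norm_uminus)
  then have "\<bar>p\<bar>^2 \<le> (L2norm u * L2norm v)^2"
    using power_mono[of "\<bar>p\<bar>" "L2norm u * L2norm v" 2] by simp
  then have "p^2 \<le> (L2norm u * L2norm v)^2" by simp
  also have "\<dots> = (b - a) * integral\<^sup>L lborel (\<lambda>x. indicator {a..b} x * (g x)^2)"
  proof -
    have q: "0 \<le> integral\<^sup>L lborel (\<lambda>x. indicator {a..b} x * (g x)^2)"
      by (rule integral_nonneg_AE) (auto split: split_indicator)
    have "(L2norm u * L2norm v)^2 = (sqrt (b - a))^2 * (sqrt (integral\<^sup>L lborel (\<lambda>x. indicator {a..b} x * (g x)^2)))^2"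
      unfolding nu nv power_mult_distrib ..
    also have "\<dots> = (b - a) * integral\<^sup>L lborel (\<lambda>x. indicator {a..b} x * (g x)^2)"
      using q assms(2) by (simp only: real_sqrt_pow2 diff_ge_0_iff_ge)
    finally show ?thesis .
  qed
  finally show ?thesis unfolding p_def .
qed

lemma Aop_eq: "Aop m f \<xi> = set_lebesgue_integral lborel {- real m / 2 .. real m / 2} (\<lambda>s. f (\<xi> + s))"
  unfolding Aop_def ..

lemma Aop_bound:
  assumes "L2 f"
  shows "\<bar>Aop m f \<xi>\<bar> \<le> sqrt (real m) * L2norm f"
proof -
  let ?g = "\<lambda>s. f (\<xi> + s)"
  have Lg: "L2 ?g" using L2_shift(1)[OF assms] .
  have "(Aop m f \<xi>)^2 \<le> real m * integral\<^sup>L lborel (\<lambda>x. indicator {- real m / 2 .. real m / 2} x * (?g x)^2)"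
    using L2_CS_interval[OF Lg, of "- real m / 2" "real m / 2"] unfolding Aop_eq by simp
  also have "\<dots> \<le> real m * integral\<^sup>L lborel (\<lambda>x. (?g x)^2)"
  proof (intro mult_left_mono integral_mono)
    show "integrable lborel (\<lambda>x. (?g x)^2)" using Lg unfolding L2_def by simp
    show "integrable lborel (\<lambda>x. indicator {- real m / 2 .. real m / 2} x * (?g x)^2)"
      using integrable_real_mult_indicator[of "{- real m / 2 .. real m / 2}" lborel "\<lambda>x. (?g x)^2"] Lg
      unfolding L2_def by (simp add: mult.commute)
  qed (auto split: split_indicator)
  also have "\<dots> = (sqrt (real m) * L2norm f)^2"
    using L2_shift(2)[OF assms, of \<xi>] L2norm_sq[of ?g] by (simp add: power_mult_distrib)
  finally have "(Aop m f \<xi>)^2 \<le> (sqrt (real m) * L2norm f)^2" .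
  moreover have "0 \<le> sqrt (real m) * L2norm f" by (simp add: L2norm_nonneg)
  ultimately show ?thesis using abs_le_square_iff[of "Aop m f \<xi>" "sqrt (real m) * L2norm f"] by simp
qed


lemma tonelli_shift:
  fixes g :: "real \<Rightarrow> real"
  assumes [measurable]: "g \<in> borel_measurable borel" and ab: "a \<le> b" and g0: "\<And>x. 0 \<le> g x"
  shows "(\<integral>\<^sup>+\<xi>. (\<integral>\<^sup>+s. ennreal (indicator {a..b} s * g (\<xi> + s)) \<partial>lborel) \<partial>lborel)
       = ennreal (b - a) * (\<integral>\<^sup>+x. ennreal (g x) \<partial>lborel)"
proof -
  have m: "(\<lambda>(\<xi>, s). ennreal (indicator {a..b} s * g (\<xi> + s))) \<in> borel_measurable (lborel \<Otimes>\<^sub>M lborel)"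
    by measurable
  have "(\<integral>\<^sup>+\<xi>. (\<integral>\<^sup>+s. ennreal (indicator {a..b} s * g (\<xi> + s)) \<partial>lborel) \<partial>lborel)
      = (\<integral>\<^sup>+s. (\<integral>\<^sup>+\<xi>. ennreal (indicator {a..b} s * g (\<xi> + s)) \<partial>lborel) \<partial>lborel)"
    using lborel_pair.Fubini'[OF m] by simp
  also have "\<dots> = (\<integral>\<^sup>+s. (\<integral>\<^sup>+x. ennreal (g x) \<partial>lborel) * indicator {a..b} s \<partial>lborel)"
  proof (rule nn_integral_cong)
    fix s :: real
    have e: "(\<lambda>\<xi>. ennreal (indicator {a..b} s * g (\<xi> + s))) = (\<lambda>\<xi>. indicator {a..b} s * ennreal (g (s + 1 * \<xi>)))"
      by (auto split: split_indicator simp: add.commute)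
    have "(\<integral>\<^sup>+\<xi>. ennreal (indicator {a..b} s * g (\<xi> + s)) \<partial>lborel) = indicator {a..b} s * (\<integral>\<^sup>+\<xi>. ennreal (g (s + 1 * \<xi>)) \<partial>lborel)"
      unfolding e by (rule nn_integral_cmult) measurable
    also have "(\<integral>\<^sup>+\<xi>. ennreal (g (s + 1 * \<xi>)) \<partial>lborel) = (\<integral>\<^sup>+x. ennreal (g x) \<partial>lborel)"
      using nn_integral_real_affine[of "\<lambda>x. ennreal (g x)" 1 s] by simp
    finally show "(\<integral>\<^sup>+\<xi>. ennreal (indicator {a..b} s * g (\<xi> + s)) \<partial>lborel) = (\<integral>\<^sup>+x. ennreal (g x) \<partial>lborel) * indicator {a..b} s"
      by (simp add: mult.commute)
  qed
  also have "\<dots> = (\<integral>\<^sup>+x. ennreal (g x) \<partial>lborel) * emeasure lborel {a..b}"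
    by (rule nn_integral_cmult_indicator) simp
  also have "\<dots> = ennreal (b - a) * (\<integral>\<^sup>+x. ennreal (g x) \<partial>lborel)"
    using ab by (simp add: mult.commute)
  finally show ?thesis .
qed

lemma Aop_measurable:
  assumes [measurable]: "f \<in> borel_measurable borel"
  shows "Aop m f \<in> borel_measurable borel"
proof -
  have m: "(\<lambda>(\<xi>, s). indicator {- real m / 2 .. real m / 2} s *\<^sub>R f (\<xi> + s) :: real) \<in> borel_measurable (lborel \<Otimes>\<^sub>M lborel)"
    by measurable
  have "(\<lambda>\<xi>. \<integral>s. indicator {- real m / 2 .. real m / 2} s *\<^sub>R f (\<xi> + s) \<partial>lborel) \<in> borel_measurable lborel"
    using lborel.borel_measurable_lebesgue_integral[OF m] by simp
  then show ?thesis unfolding Aop_def set_lebesgue_integral_def by simp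
qed

lemma Aop_L2:
  assumes "L2 f"
  shows "L2 (Aop m f)" "L2norm (Aop m f) \<le> real m * L2norm f"
proof -
  have [measurable]: "f \<in> borel_measurable borel" using L2_meas[OF assms] .
  have [measurable]: "Aop m f \<in> borel_measurable borel" using Aop_measurable by simp
  let ?I = "{- real m / 2 .. real m / 2}"
  have if2: "integrable lborel (\<lambda>x. (f x)^2)" using assms unfolding L2_def by simp
  have pt: "ennreal ((Aop m f \<xi>)^2) \<le> ennreal (real m) * (\<integral>\<^sup>+s. ennreal (indicator ?I s * (f (\<xi> + s))^2) \<partial>lborel)" for \<xi>
  proof -
    let ?g = "\<lambda>s. f (\<xi> + s)"
    have Lg: "L2 ?g" using L2_shift(1)[OF assms] .
    have ii: "integrable lborel (\<lambda>s. indicator ?I s * (?g s)^2)"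
      using integrable_real_mult_indicator[of ?I lborel "\<lambda>x. (?g x)^2"] Lg
      unfolding L2_def by (simp add: mult.commute)
    have "(Aop m f \<xi>)^2 \<le> real m * integral\<^sup>L lborel (\<lambda>s. indicator ?I s * (?g s)^2)"
      using L2_CS_interval[OF Lg, of "- real m / 2" "real m / 2"] unfolding Aop_eq by simp
    then have "ennreal ((Aop m f \<xi>)^2) \<le> ennreal (real m * integral\<^sup>L lborel (\<lambda>s. indicator ?I s * (?g s)^2))"
      by (rule ennreal_leI)
    also have "\<dots> = ennreal (real m) * ennreal (integral\<^sup>L lborel (\<lambda>s. indicator ?I s * (?g s)^2))"
      by (simp add: ennreal_mult integral_nonneg_AE)
    also have "ennreal (integral\<^sup>L lborel (\<lambda>s. indicator ?I s * (?g s)^2)) = (\<integral>\<^sup>+s. ennreal (indicator ?I s * (f (\<xi> + s))^2) \<partial>lborel)"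
      by (rule nn_integral_eq_integral[symmetric]) (use ii in auto)
    finally show ?thesis .
  qed
  have "(\<integral>\<^sup>+\<xi>. ennreal ((Aop m f \<xi>)^2) \<partial>lborel) \<le> (\<integral>\<^sup>+\<xi>. ennreal (real m) * (\<integral>\<^sup>+s. ennreal (indicator ?I s * (f (\<xi> + s))^2) \<partial>lborel) \<partial>lborel)"
    by (rule nn_integral_mono) (rule pt)
  also have "\<dots> = ennreal (real m) * (\<integral>\<^sup>+\<xi>. (\<integral>\<^sup>+s. ennreal (indicator ?I s * (f (\<xi> + s))^2) \<partial>lborel) \<partial>lborel)"
    by (rule nn_integral_cmult) measurable
  also have "(\<integral>\<^sup>+\<xi>. (\<integral>\<^sup>+s. ennreal (indicator ?I s * (f (\<xi> + s))^2) \<partial>lborel) \<partial>lborel) = ennreal (real m) * (\<integral>\<^sup>+x. ennreal ((f x)^2) \<partial>lborel)"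
    using tonelli_shift[of "\<lambda>x. (f x)^2" "- real m / 2" "real m / 2"] by simp
  also have "(\<integral>\<^sup>+x. ennreal ((f x)^2) \<partial>lborel) = ennreal (integral\<^sup>L lborel (\<lambda>x. (f x)^2))"
    by (rule nn_integral_eq_integral) (use if2 in auto)
  finally have le: "(\<integral>\<^sup>+\<xi>. ennreal ((Aop m f \<xi>)^2) \<partial>lborel) \<le> ennreal ((real m)^2 * integral\<^sup>L lborel (\<lambda>x. (f x)^2))"
    by (simp add: ennreal_mult integral_nonneg_AE power2_eq_square mult.assoc)
  have int: "integrable lborel (\<lambda>\<xi>. (Aop m f \<xi>)^2)"
  proof (rule integrableI_bounded)
    show "(\<lambda>\<xi>. (Aop m f \<xi>)^2) \<in> borel_measurable lborel" by measurable
    show "(\<integral>\<^sup>+\<xi>. ennreal (norm ((Aop m f \<xi>)^2)) \<partial>lborel) < \<infinity>"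
      using le by (simp add: le_less_trans)
  qed
  then show "L2 (Aop m f)" unfolding L2_def by simp
  have "integral\<^sup>L lborel (\<lambda>\<xi>. (Aop m f \<xi>)^2) = enn2real (\<integral>\<^sup>+\<xi>. ennreal ((Aop m f \<xi>)^2) \<partial>lborel)"
    by (rule integral_eq_nn_integral) auto
  also have "\<dots> \<le> (real m)^2 * integral\<^sup>L lborel (\<lambda>x. (f x)^2)"
    using le by (intro enn2real_leI) (auto simp: integral_nonneg_AE)
  finally have "(L2norm (Aop m f))^2 \<le> (real m * L2norm f)^2"
    unfolding L2norm_sq power_mult_distrib .
  then show "L2norm (Aop m f) \<le> real m * L2norm f"
    by (rule power2_le_imp_le) (simp add: L2norm_nonneg)
qed

lemma Aop_diff:
  assumes "L2 f" "L2 g"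
  shows "Aop m (\<lambda>x. f x - g x) \<xi> = Aop m f \<xi> - Aop m g \<xi>"
  unfolding Aop_eq
  by (rule set_integral_diff(2)) (use L2_set_integrable L2_shift(1) assms in auto)

lemma Aop_cmult: "Aop m (\<lambda>x. c * f x) \<xi> = c * Aop m f \<xi>"
  unfolding Aop_eq by simp

lemma Aop_nonneg: "(\<And>x. 0 \<le> f x) \<Longrightarrow> 0 \<le> Aop m f \<xi>"
  unfolding Aop_eq set_lebesgue_integral_def by (rule integral_nonneg_AE) auto

lemma Aop_abs_bound:
  assumes "\<And>x. \<bar>f x\<bar> \<le> B" "f \<in> borel_measurable borel"
  shows "\<bar>Aop m f \<xi>\<bar> \<le> real m * B"
proof -
  let ?I = "{- real m / 2 .. real m / 2}"
  have "\<bar>Aop m f \<xi>\<bar> = \<bar>integral\<^sup>L lborel (\<lambda>s. indicator ?I s * f (\<xi> + s))\<bar>"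
    unfolding Aop_eq set_lebesgue_integral_def by simp
  also have "\<dots> \<le> integral\<^sup>L lborel (\<lambda>s. indicator ?I s * B)"
  proof -
    have ib: "integrable lborel (\<lambda>s. indicator ?I s * B)"
      using emeasure_compact_finite[of ?I] by (intro integrable_mult_left integrable_real_indicator) auto
    have bd: "\<bar>indicator ?I s * f (\<xi> + s)\<bar> \<le> indicator ?I s * B" for s
      using assms(1)[of "\<xi> + s"] by (auto split: split_indicator)
    have mf: "(\<lambda>s. indicator ?I s * f (\<xi> + s)) \<in> borel_measurable lborel"
      using assms(2) by measurable
    have if': "integrable lborel (\<lambda>s. indicator ?I s * f (\<xi> + s))"
      by (rule Bochner_Integration.integrable_bound[OF ib mf]) (use bd in \<open>auto intro!: AE_I2 order.trans[OF _ abs_ge_self]\<close>)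
    show ?thesis by (rule integral_abs_bound_integral[OF if' ib bd])
  qed
  also have "\<dots> = real m * B" by (simp add: mult.commute)
  finally show ?thesis .
qed

lemma smooth_profile_mono:
  assumes "smooth_profile F" "0 \<le> u" "u \<le> v"
  shows "F v \<le> F u"
proof -
  have sm: "smooth F" and H: "\<forall>x\<ge>0. deriv F x \<le> 0"
    using assms(1) unfolding smooth_profile_iff by blast+
  show ?thesis
  proof (rule DERIV_nonpos_imp_nonincreasing[OF assms(3)])
    fix x assume "u \<le> x" "x \<le> v"
    then show "\<exists>y. DERIV F x :> y \<and> y \<le> 0"
      using H assms(2) smooth_differentiable[OF sm, of x]
      by (intro exI[of _ "deriv F x"]) (auto simp: DERIV_deriv_iff_real_differentiable)
  qed
qed

lemma Aop_HK:
  assumes "continuous_on UNIV F"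
  shows "Aop m F \<xi> = integral {- real m / 2 .. real m / 2} (\<lambda>s. F (\<xi> + s))"
proof -
  have c: "continuous_on {- real m / 2 .. real m / 2} (\<lambda>s. F (\<xi> + s))"
    by (rule continuous_on_compose2[OF assms]) (auto intro!: continuous_intros)
  have "set_integrable lborel {- real m / 2 .. real m / 2} (\<lambda>s. F (\<xi> + s))"
    unfolding set_integrable_def by (rule borel_integrable_compact[OF _ c]) simp
  then show ?thesis unfolding Aop_eq by (rule set_borel_integral_eq_integral(2))
qed

lemma Aop_deriv_smooth:
  assumes "smooth F"
  shows "(Aop m F has_real_derivative F (\<xi> + real m / 2) - F (\<xi> + - (real m / 2))) (at \<xi>)"
proof -
  define a where "a = real m / 2"
  have a0: "0 \<le> a" unfolding a_def by simp
  define D where "D = deriv F"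
  have cF: "continuous_on UNIV F" using smooth_continuous[OF assms] .
  have cD: "continuous_on UNIV D" unfolding D_def using smooth_continuous[OF smooth_deriv_smooth[OF assms]] .
  have dF: "(F has_real_derivative D x) (at x)" for x
    unfolding D_def using smooth_differentiable[OF assms, of x]
    by (simp add: DERIV_deriv_iff_real_differentiable)
  have eq: "Aop m F = (\<lambda>\<xi>. integral (cbox (-a) a) (\<lambda>s. F (\<xi> + s)))"
    using Aop_HK[OF cF] unfolding a_def cbox_interval by auto
  have "((\<lambda>\<xi>. integral (cbox (-a) a) (\<lambda>s. F (\<xi> + s))) has_field_derivative integral (cbox (-a) a) (\<lambda>s. D (\<xi> + s))) (at \<xi> within UNIV)"
  proof (rule leibniz_rule_field_derivative)
    fix x t :: real
    show "((\<lambda>x. F (x + t)) has_field_derivative D (x + t)) (at x within UNIV)"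
      using dF[of "x + t"] by (simp add: DERIV_shift)
  next
    fix x :: real
    show "(\<lambda>s. F (x + s)) integrable_on cbox (- a) a"
      by (rule integrable_continuous) (rule continuous_on_compose2[OF cF]; auto intro!: continuous_intros)
  next
    have "continuous_on UNIV (\<lambda>p::real\<times>real. D (fst p + snd p))"
      by (rule continuous_on_compose2[OF cD]) (auto intro!: continuous_intros)
    then show "continuous_on (UNIV \<times> cbox (- a) a) (\<lambda>(x, t). D (x + t))"
      unfolding case_prod_beta by (rule continuous_on_subset) auto
  qed auto
  moreover have "integral (cbox (-a) a) (\<lambda>s. D (\<xi> + s)) = F (\<xi> + a) - F (\<xi> + - a)"
  proof -
    have "((\<lambda>s. D (\<xi> + s)) has_integral (F (\<xi> + a) - F (\<xi> + - a))) {-a..a}"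
    proof (rule fundamental_theorem_of_calculus)
      show "- a \<le> a" using a0 by simp
      fix x assume "x \<in> {-a..a}"
      have "((\<lambda>s. F (\<xi> + s)) has_real_derivative D (\<xi> + x)) (at x)"
        using dF[of "\<xi> + x"] DERIV_shift[of F "D (\<xi> + x)" x \<xi>] by (simp add: add.commute)
      then show "((\<lambda>s. F (\<xi> + s)) has_vector_derivative D (\<xi> + x)) (at x within {-a..a})"
        by (simp add: has_real_derivative_iff_has_vector_derivative has_vector_derivative_at_within)
    qed
    then show ?thesis unfolding cbox_interval by (rule integral_unique)
  qed
  ultimately show ?thesis unfolding eq a_def by simp
qed

lemma Aop_smooth_profile:
  assumes "smooth_profile F"
  shows "smooth_profile (Aop m F)"
proof -
  define a where "a = real m / 2"
  have a0: "0 \<le> a" unfolding a_def by simp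
  obtain R where R: "\<And>x. R < \<bar>x\<bar> \<Longrightarrow> F x = 0" and sm: "smooth F"
    using assms unfolding smooth_profile_iff by blast
  have cF: "continuous_on UNIV F" using smooth_continuous[OF sm] .
  have d: "(Aop m F has_real_derivative F (x + a) - F (x + - a)) (at x)" for x
    using Aop_deriv_smooth[OF sm] unfolding a_def .
  have dd: "deriv (Aop m F) x = F (x + a) - F (x + - a)" for x
    using d by (rule DERIV_imp_deriv)
  have even: "F (- x) = F x" for x using smooth_profile_even[OF assms] .
  have smA: "smooth (Aop m F)"
    by (rule smooth_from_deriv[OF d]) (intro smooth_diff smooth_shift sm)
  have supp: "\<forall>x. R + a < \<bar>x\<bar> \<longrightarrow> Aop m F x = 0"
  proof (intro allI impI)
    fix x assume x: "R + a < \<bar>x\<bar>"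
    have "indicator {- real m / 2 .. real m / 2} s * F (x + s) = 0" for s :: real
    proof (cases "s \<in> {-a..a}")
      case True
      then have "R < \<bar>x + s\<bar>" using x unfolding a_def by auto
      then show ?thesis using R by simp
    qed (simp add: a_def)
    then have "(\<lambda>s. indicator {- real m / 2 .. real m / 2} s * F (x + s)) = (\<lambda>s. 0)" by (rule ext)
    then show "Aop m F x = 0" unfolding Aop_eq set_lebesgue_integral_def by simp
  qed
  have Aeven: "Aop m F (- x) = Aop m F x" for x
  proof -
    have "Aop m F (- x) = integral {-a..a} (\<lambda>s. F (- x + s))" using Aop_HK[OF cF] unfolding a_def by simp
    also have "\<dots> = integral {-a..a} (\<lambda>s. F (x + - s))"
      using even by (metis minus_add_distrib minus_minus add.commute)
    also have "\<dots> = integral {-a..a} (\<lambda>s. F (x + s))"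
      using Henstock_Kurzweil_Integration.integral_reflect_real[of a "-a" "\<lambda>s. F (x + s)"] by simp
    also have "\<dots> = Aop m F x" using Aop_HK[OF cF] unfolding a_def by simp
    finally show ?thesis .
  qed
  show ?thesis
    unfolding smooth_profile_iff
  proof (intro conjI allI impI)
    show "smooth (Aop m F)" by (rule smA)
    show "\<exists>R. \<forall>x. R < \<bar>x\<bar> \<longrightarrow> Aop m F x = 0" using supp by blast
    fix x :: real assume x: "0 \<le> x"
    show "Aop m F x = Aop m F (- x)" using Aeven[of x] by simp
    show "0 \<le> Aop m F x" by (rule Aop_nonneg) (rule smooth_profile_nonneg[OF assms])
    show "deriv (Aop m F) x = - deriv (Aop m F) (- x)"
      unfolding dd using even[of "x + a"] even[of "x + - a"] by (simp add: algebra_simps)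
    have "F (x + a) \<le> F \<bar>x + - a\<bar>"
      by (rule smooth_profile_mono[OF assms]) (use x a0 in auto)
    also have "F \<bar>x + - a\<bar> = F (x + - a)" using even[of "x + - a"] by (simp add: abs_if)
    finally show "deriv (Aop m F) x \<le> 0" unfolding dd by simp
  qed
qed

lemma lip_interval:
  fixes f f' :: "real \<Rightarrow> real"
  assumes "\<And>r. r \<in> {a..b} \<Longrightarrow> (f has_real_derivative f' r) (at r within {a..b})"
    "\<And>r. r \<in> {a..b} \<Longrightarrow> \<bar>f' r\<bar> \<le> B" "x \<in> {a..b}" "y \<in> {a..b}"
  shows "\<bar>f x - f y\<bar> \<le> B * \<bar>x - y\<bar>"
  using field_differentiable_bound[of "{a..b}" f f' B x y] assms by auto

lemma cone_Aop_nonneg: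
  assumes "W \<in> cone" shows "0 \<le> Aop m W \<xi>"
proof -
  have [measurable]: "W \<in> borel_measurable borel" using cone_L2[OF assms] L2_meas by blast
  have "AE x in lborel. 0 \<le> W x" using cone_nonneg[OF assms] .
  then have "AE s in lborel. 0 \<le> W (\<xi> + 1 * s)"
    by (intro AE_borel_affine) auto
  then have "AE s in lborel. 0 \<le> indicator {- real m / 2 .. real m / 2} s * W (\<xi> + s)"
    by eventually_elim (auto split: split_indicator)
  then show ?thesis unfolding Aop_eq set_lebesgue_integral_def
    by (simp add: integral_nonneg_AE)
qed

lemma poly_antideriv:
  fixes c :: "nat \<Rightarrow> real"
  shows "((\<lambda>x. d * x + (\<Sum>i\<le>n. c i / real (Suc i) * x ^ Suc i)) has_real_derivative
           d + (\<Sum>i\<le>n. c i * x ^ i)) (at x)"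
proof -
  have "((\<lambda>x. \<Sum>i\<le>n. c i / real (Suc i) * x ^ Suc i) has_real_derivative
           (\<Sum>i\<le>n. c i / real (Suc i) * (real (Suc i) * x ^ i))) (at x)"
    apply (intro DERIV_sum DERIV_cmult)
    subgoal for i using DERIV_pow[of "Suc i" x] by simp
    done
  moreover have "(\<Sum>i\<le>n. c i / real (Suc i) * (real (Suc i) * x ^ i)) = (\<Sum>i\<le>n. c i * x ^ i)"
    by (intro sum.cong) (auto simp del: of_nat_Suc)
  ultimately show ?thesis
    by (intro DERIV_add) (auto intro!: derivative_eq_intros)
qed

lemma comp_cone:
  fixes h h' :: "real \<Rightarrow> real"
  assumes W: "W \<in> cone" and m: "0 < m"
    and R: "sqrt (real m) * L2norm W < R"
    and h0: "h 0 = 0"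
    and hd: "\<And>r. r \<in> {0..R} \<Longrightarrow> (h has_real_derivative h' r) (at r within {0..R})"
    and hc: "continuous_on {0..R} h'"
    and hp: "\<And>r. r \<in> {0..R} \<Longrightarrow> 0 \<le> h' r"
  shows "Aop m (\<lambda>x. h (Aop m W x)) \<in> cone"
proof -
  have "0 \<le> sqrt (real m) * L2norm W" by (simp add: L2norm_nonneg)
  then have R0: "0 < R" using R by linarith
  obtain L where L: "\<And>r. r \<in> {0..R} \<Longrightarrow> \<bar>h' r\<bar> \<le> L"
  proof -
    have "bounded (h' ` {0..R})" by (rule compact_imp_bounded[OF compact_continuous_image[OF hc]]) simp
    then obtain B where "\<forall>y\<in>h' ` {0..R}. norm y \<le> B" unfolding bounded_iff by blast
    then show ?thesis using that[of B] by auto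
  qed
  have L0: "0 \<le> L" using L[of 0] R0 by auto
  have hlip: "\<bar>h a - h b\<bar> \<le> L * \<bar>a - b\<bar>" if "a \<in> {0..R}" "b \<in> {0..R}" for a b
    by (rule lip_interval[OF hd L that])
  have hcont: "continuous_on {0..R} h" by (rule DERIV_continuous_on[OF hd])
  define hh where "hh = (\<lambda>r. h (max 0 (min R r)))"
  have hhc: "continuous_on UNIV hh" unfolding hh_def
    by (rule continuous_on_compose2[OF hcont]) (auto intro!: continuous_intros simp: R0 less_imp_le)
  have hhm[measurable]: "hh \<in> borel_measurable borel"
    using hhc by (simp add: borel_measurable_continuous_onI)
  have LW: "L2 W" using cone_L2[OF W] .
  have [measurable]: "W \<in> borel_measurable borel" using L2_meas[OF LW] .
  have AWm[measurable]: "Aop m W \<in> borel_measurable borel" using Aop_measurable by simp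
  have AWr: "Aop m W x \<in> {0..R}" for x
    using cone_Aop_nonneg[OF W, of m x] Aop_bound[OF LW, of m x] R by auto
  define g where "g = (\<lambda>x. h (Aop m W x))"
  have g_eq: "g = (\<lambda>x. hh (Aop m W x))"
  proof (rule ext)
    fix x
    have "max 0 (min R (Aop m W x)) = Aop m W x" using AWr[of x] by auto
    then show "g x = hh (Aop m W x)" unfolding g_def hh_def by simp
  qed
  have gm[measurable]: "g \<in> borel_measurable borel" unfolding g_eq by measurable
  have gb: "\<bar>g x\<bar> \<le> \<bar>L * Aop m W x\<bar>" for x
    using hlip[OF AWr[of x], of 0] R0 h0 L0 AWr[of x] unfolding g_def by (simp add: abs_mult)
  have LAW: "L2 (Aop m W)" using Aop_L2(1)[OF LW] .
  have Lg: "L2 g"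
    using L2norm_mono(1)[OF _ L2_cmult[OF LAW, of L]] gb by auto
  have LT: "L2 (Aop m g)" using Aop_L2(1)[OF Lg] .
  have sm0: "0 < sqrt (real m)" using m by simp
  show ?thesis
    unfolding g_def[symmetric]
  proof (rule cone_closed[OF LT])
    fix e :: real assume e: "e > 0"
    define d1 where "d1 = min ((R - sqrt (real m) * L2norm W) / sqrt (real m)) (e / (2 * (real m * real m * L + 1)))"
    have d1: "0 < d1" unfolding d1_def using R sm0 e L0 by (auto intro!: divide_pos_pos add_nonneg_pos)
    obtain F where F: "smooth_profile F" "L2norm (\<lambda>x. F x - W x) < d1"
      using cone_approx[OF W d1] by blast
    have LF: "L2 F" using smooth_profile_L2[OF F(1)] .
    have LFW: "L2 (\<lambda>x. F x - W x)" using L2_diff[OF LF LW] .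
    have "L2norm (\<lambda>x. W x + (F x - W x)) \<le> L2norm W + L2norm (\<lambda>x. F x - W x)"
      by (rule L2norm_triangle[OF LW LFW])
    then have NF: "L2norm F \<le> L2norm W + d1" using F(2) by simp
    have "sqrt (real m) * L2norm F \<le> sqrt (real m) * L2norm W + sqrt (real m) * d1"
      using mult_left_mono[OF NF, of "sqrt (real m)"] by (simp add: algebra_simps)
    also have "sqrt (real m) * d1 \<le> R - sqrt (real m) * L2norm W"
    proof -
      have "d1 \<le> (R - sqrt (real m) * L2norm W) / sqrt (real m)" unfolding d1_def by simp
      then show ?thesis using sm0 by (simp add: field_simps)
    qed
    finally have NF2: "sqrt (real m) * L2norm F \<le> R" by simp
    define G where "G = Aop m F"
    have GP: "smooth_profile G" unfolding G_def by (rule Aop_smooth_profile[OF F(1)])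
    have Gr: "G x \<in> {0..R}" for x
      using smooth_profile_nonneg[OF GP, of x] Aop_bound[OF LF, of m x] NF2 unfolding G_def by auto
    obtain S0 where S0: "\<And>x. S0 < \<bar>x\<bar> \<Longrightarrow> G x = 0" and smG: "smooth G"
      and HG: "\<forall>x\<ge>0. G x = G (-x) \<and> G x \<ge> 0 \<and> deriv G x = - deriv G (-x) \<and> deriv G x \<le> 0"
      using GP unfolding smooth_profile_iff by blast
    define S where "S = max S0 0"
    have S: "\<And>x. S < \<bar>x\<bar> \<Longrightarrow> G x = 0" "0 \<le> S" using S0 unfolding S_def by auto
    define \<delta> where "\<delta> = e / (8 * real m * (R + 1) * (sqrt (2 * S) + 1))"
    have \<delta>0: "0 < \<delta>" unfolding \<delta>_def using e m R0 S(2) by (auto intro!: divide_pos_pos mult_pos_pos add_nonneg_pos)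
    obtain q where q: "real_polynomial_function q" "\<And>r. r \<in> {0..R} \<Longrightarrow> \<bar>h' r - q r\<bar> < \<delta>"
      using Stone_Weierstrass_real_polynomial_function[OF compact_Icc hc \<delta>0] by blast
    obtain c n where qe: "q = (\<lambda>x. \<Sum>i\<le>n. c i * x ^ i)"
      using q(1) unfolding real_polynomial_function_iff_sum by blast
    define P where "P = (\<lambda>x. \<delta> * x + (\<Sum>i\<le>n. c i / real (Suc i) * x ^ Suc i))"
    have dP: "(P has_real_derivative \<delta> + q x) (at x)" for x
      unfolding P_def qe by (rule poly_antideriv)
    have P0: "P 0 = 0" unfolding P_def by simp
    have qlow: "0 \<le> \<delta> + q r" if "r \<in> {0..R}" for r
      using q(2)[OF that] hp[OF that] by linarith
    have Pnn: "0 \<le> P r" if "r \<in> {0..R}" for r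
    proof -
      have "P 0 \<le> P r"
      proof (rule DERIV_nonneg_imp_nondecreasing[of 0 r P])
        fix x assume x: "0 \<le> x" "x \<le> r"
        then have "x \<in> {0..R}" using that by simp
        then show "\<exists>y. DERIV P x :> y \<and> 0 \<le> y" using dP[of x] qlow by blast
      qed (use that in simp)
      then show ?thesis using P0 by simp
    qed
    have Pclose: "\<bar>P r - h r\<bar> \<le> 2 * \<delta> * R" if "r \<in> {0..R}" for r
    proof -
      have d1: "((\<lambda>r. P r - h r) has_real_derivative \<delta> + q r - h' r) (at r within {0..R})" if r: "r \<in> {0..R}" for r
        by (rule DERIV_diff[OF has_field_derivative_at_within[OF dP] hd[OF r]])
      have d2: "\<bar>\<delta> + q r - h' r\<bar> \<le> 2 * \<delta>" if r: "r \<in> {0..R}" for r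
        using q(2)[OF r] \<delta>0 by linarith
      have r0: "0 \<in> {0..R}" using R0 by simp
      have "\<bar>(P r - h r) - (P 0 - h 0)\<bar> \<le> (2 * \<delta>) * \<bar>r - 0\<bar>"
        using lip_interval[of 0 R "\<lambda>r. P r - h r" "\<lambda>r. \<delta> + q r - h' r" "2 * \<delta>" r 0, OF d1 d2 that r0] by simp
      then have "\<bar>P r - h r\<bar> \<le> 2 * \<delta> * r" using P0 h0 that by simp
      also have "\<dots> \<le> 2 * \<delta> * R" using that \<delta>0 by (auto intro!: mult_left_mono)
      finally show ?thesis .
    qed
    define H where "H = (\<lambda>x. P (G x))"
    have dH: "(H has_real_derivative (\<delta> + q (G x)) * deriv G x) (at x)" for x
      unfolding H_def
      by (rule DERIV_chain2[OF dP]) (use smooth_differentiable[OF smG, of x] in \<open>simp add: DERIV_deriv_iff_real_differentiable\<close>)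
    have ddH: "deriv H x = (\<delta> + q (G x)) * deriv G x" for x using dH by (rule DERIV_imp_deriv)
    have Geven: "G (- x) = G x" for x using smooth_profile_even[OF GP] .
    have smH: "smooth H"
    proof -
      have "smooth (\<lambda>x. \<delta> * G x + (\<Sum>i\<le>n. c i / real (Suc i) * G x ^ Suc i))"
        by (intro smooth_add smooth_cmult smooth_sum smooth_power smG)
      then show ?thesis unfolding H_def P_def .
    qed
    have HP: "smooth_profile H"
      unfolding smooth_profile_iff
    proof (intro conjI allI impI)
      show "smooth H" by (rule smH)
      show "\<exists>R. \<forall>x. R < \<bar>x\<bar> \<longrightarrow> H x = 0"
        by (rule exI[of _ S]) (auto simp: H_def S(1) P0)
      fix x :: real assume x: "0 \<le> x"
      show "H x = H (- x)" unfolding H_def using Geven[of x] by simp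
      show "0 \<le> H x" unfolding H_def by (rule Pnn[OF Gr])
      have dGx: "deriv G x = - deriv G (- x)" "deriv G x \<le> 0" using HG x by blast+
      show "deriv H x = - deriv H (- x)" unfolding ddH Geven using dGx(1) by simp
      show "deriv H x \<le> 0" unfolding ddH using qlow[OF Gr[of x]] dGx(2)
        by (simp add: mult_nonneg_nonpos)
    qed
    have LH: "L2 H" using smooth_profile_L2[OF HP] .
    have Hm[measurable]: "H \<in> borel_measurable borel" using L2_meas[OF LH] .
    have Gm[measurable]: "G \<in> borel_measurable borel" using L2_meas[OF smooth_profile_L2[OF GP]] .
    have hG_eq: "(\<lambda>x. h (G x)) = (\<lambda>x. hh (G x))"
    proof (rule ext)
      fix x
      have "max 0 (min R (G x)) = G x" using Gr[of x] by auto
      then show "h (G x) = hh (G x)" unfolding hh_def by simp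
    qed
    have hGm[measurable]: "(\<lambda>x. h (G x)) \<in> borel_measurable borel" unfolding hG_eq by measurable
    define u where "u = (\<lambda>x. H x - h (G x))"
    define v where "v = (\<lambda>x. h (G x) - g x)"
    have um: "u \<in> borel_measurable lborel" unfolding u_def by measurable
    have vm: "v \<in> borel_measurable lborel" unfolding v_def by measurable
    have ub: "\<bar>u x\<bar> \<le> 2 * \<delta> * R" for x unfolding u_def H_def using Pclose[OF Gr[of x]] .
    have us: "u x = 0" if "S < \<bar>x\<bar>" for x unfolding u_def H_def using S(1)[OF that] P0 h0 by simp
    have Lu: "L2 u" and Nu: "L2norm u \<le> 2 * \<delta> * R * sqrt (2 * S)"
      using L2_bounded_support[OF um ub us S(2)] by auto
    have GAW: "G x - Aop m W x = Aop m (\<lambda>x. F x - W x) x" for x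
      unfolding G_def using Aop_diff[OF LF LW] by simp
    have vb: "\<bar>v x\<bar> \<le> \<bar>L * Aop m (\<lambda>x. F x - W x) x\<bar>" for x
      using hlip[OF Gr[of x] AWr[of x]] L0 unfolding v_def g_def GAW by (simp add: abs_mult)
    have LAFW: "L2 (\<lambda>x. L * Aop m (\<lambda>x. F x - W x) x)" using L2_cmult[OF Aop_L2(1)[OF LFW]] .
    have Lv: "L2 v" using L2norm_mono(1)[OF vm LAFW] vb by auto
    have "L2norm v \<le> L2norm (\<lambda>x. L * Aop m (\<lambda>x. F x - W x) x)"
      using L2norm_mono(2)[OF vm LAFW] vb by auto
    also have "\<dots> = L * L2norm (Aop m (\<lambda>x. F x - W x))" using L0 by (simp add: L2norm_cmult)
    also have "\<dots> \<le> L * (real m * L2norm (\<lambda>x. F x - W x))"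
      using Aop_L2(2)[OF LFW] L0 by (intro mult_left_mono) auto
    also have "\<dots> \<le> L * (real m * d1)"
      using F(2) L0 by (intro mult_left_mono) auto
    finally have Nv: "L2norm v \<le> L * (real m * d1)" .
    have HG_eq: "(\<lambda>x. H x - g x) = (\<lambda>x. u x + v x)" unfolding u_def v_def by auto
    have LHg: "L2 (\<lambda>x. H x - g x)" using L2_diff[OF LH Lg] .
    have NHg: "L2norm (\<lambda>x. H x - g x) \<le> L2norm u + L2norm v"
      unfolding HG_eq by (rule L2norm_triangle[OF Lu Lv])
    have Adiff: "(\<lambda>x. Aop m H x - Aop m g x) = Aop m (\<lambda>x. H x - g x)"
      using Aop_diff[OF LH Lg] by auto
    have "L2norm (\<lambda>x. Aop m H x - Aop m g x) \<le> real m * L2norm (\<lambda>x. H x - g x)"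
      unfolding Adiff by (rule Aop_L2(2)[OF LHg])
    also have "\<dots> \<le> real m * (2 * \<delta> * R * sqrt (2 * S)) + real m * (L * (real m * d1))"
      using NHg Nu Nv by (simp add: ring_distribs[symmetric] mult_left_mono)
    also have "\<dots> < e"
    proof -
      define X where "X = R / (R + 1)"
      define Y where "Y = sqrt (2 * S) / (sqrt (2 * S) + 1)"
      have X: "0 \<le> X" "X \<le> 1" unfolding X_def using R0 by auto
      have sq: "0 \<le> sqrt (2 * S)" using S(2) by simp
      have sq1: "0 < sqrt (2 * S) + 1" using sq by linarith
      have Y: "0 \<le> Y" "Y \<le> 1" unfolding Y_def using sq apply simp
        unfolding pos_divide_le_eq[OF sq1] by simp
      have "real m * (2 * \<delta> * R * sqrt (2 * S)) = e / 4 * (X * Y)"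
      proof -
        define a where "a = sqrt (2 * S)"
        have n1: "R + 1 \<noteq> 0" "a + 1 \<noteq> 0" "real m \<noteq> 0" using R0 sq1 m unfolding a_def by auto
        define D where "D = (R + 1) * (a + 1)"
        have D0: "D \<noteq> 0" using n1 unfolding D_def by simp
        have xy: "R / (R + 1) * (a / (a + 1)) = R * a / D" unfolding D_def by simp
        have dd: "e / (8 * real m * (R + 1) * (a + 1)) = e / (8 * real m * D)" unfolding D_def by (simp add: mult.assoc)
        have "real m * (2 * (e / (8 * real m * D)) * R * a) = e / 4 * (R * a / D)"
          using n1 D0 by (simp add: field_simps)
        then show ?thesis unfolding \<delta>_def X_def Y_def a_def[symmetric] xy dd .
      qed
      also have "\<dots> \<le> e / 4" using X Y e by (simp add: mult_le_one)
      finally have A: "real m * (2 * \<delta> * R * sqrt (2 * S)) \<le> e / 4" .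
      have "real m * (L * (real m * d1)) = (real m * real m * L) * d1" by simp
      also have "\<dots> \<le> (real m * real m * L) * (e / (2 * (real m * real m * L + 1)))"
        using L0 by (intro mult_left_mono) (auto simp: d1_def)
      also have "\<dots> < e / 2"
      proof -
        have p: "0 \<le> real m * real m * L" using L0 by simp
        have "(real m * real m * L) * (e / (2 * (real m * real m * L + 1))) = (e / 2) * ((real m * real m * L) / (real m * real m * L + 1))"
          by (simp add: field_simps)
        also have "\<dots> < e / 2" using p e by (simp add: field_simps)
        finally show ?thesis .
      qed
      finally have B: "real m * (L * (real m * d1)) < e / 2" .
      show ?thesis using A B e by linarith
    qed
    finally have "L2norm (\<lambda>x. Aop m H x - Aop m g x) < e" .
    moreover have "Aop m H \<in> cone" by (rule smooth_profile_cone[OF Aop_smooth_profile[OF HP]])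
    ultimately show "\<exists>k\<in>cone. L2norm (\<lambda>x. k x - Aop m g x) < e" by blast
  qed
qed

lemma L2_sum_finite_aux:
  fixes k :: nat and f :: "nat \<Rightarrow> real \<Rightarrow> real"
  assumes "\<And>n. n < k \<Longrightarrow> L2 (f n)"
  shows "L2 (\<lambda>x. \<Sum>n<k. f n x) \<and> L2norm (\<lambda>x. \<Sum>n<k. f n x) \<le> (\<Sum>n<k. L2norm (f n))"
  using assms
proof (induction k)
  case 0
  show ?case unfolding L2_def by (simp add: L2norm_def)
next
  case (Suc k)
  have L1: "L2 (\<lambda>x. \<Sum>n<k. f n x)" and N1: "L2norm (\<lambda>x. \<Sum>n<k. f n x) \<le> (\<Sum>n<k. L2norm (f n))"
    using Suc.IH Suc.prems by auto
  have Lk: "L2 (f k)" using Suc.prems by simp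
  have "L2 (\<lambda>x. (\<Sum>n<k. f n x) + f k x)" by (rule L2_add[OF L1 Lk])
  moreover have "L2norm (\<lambda>x. (\<Sum>n<k. f n x) + f k x) \<le> (\<Sum>n<k. L2norm (f n)) + L2norm (f k)"
    using L2norm_triangle[OF L1 Lk] N1 by simp
  ultimately show ?case by simp
qed

lemma L2_sum_finite:
  fixes k :: nat and f :: "nat \<Rightarrow> real \<Rightarrow> real"
  assumes "\<And>n. n < k \<Longrightarrow> L2 (f n)"
  shows "L2 (\<lambda>x. \<Sum>n<k. f n x)" "L2norm (\<lambda>x. \<Sum>n<k. f n x) \<le> (\<Sum>n<k. L2norm (f n))"
  using L2_sum_finite_aux[OF assms] by auto

lemma L2_series:
  fixes f :: "nat \<Rightarrow> real \<Rightarrow> real"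
  assumes L: "\<And>n. L2 (f n)" and c: "\<And>n. L2norm (f n) \<le> c n" and sc: "summable c"
    and sf: "\<And>x. summable (\<lambda>n. f n x)"
  shows "L2 (\<lambda>x. \<Sum>n. f n x)" "L2norm (\<lambda>x. \<Sum>n. f n x) \<le> (\<Sum>n. c n)"
proof -
  define S where "S = (\<lambda>k x. \<Sum>n<k. f n x)"
  define C where "C = (\<Sum>n. c n)"
  have c0: "0 \<le> c n" for n using c[of n] L2norm_nonneg[of "f n"] by linarith
  have LS: "L2 (S k)" for k unfolding S_def using L2_sum_finite(1)[of k f] L by auto
  have NS: "L2norm (S k) \<le> C" for k
  proof -
    have "L2norm (S k) \<le> (\<Sum>n<k. L2norm (f n))" unfolding S_def using L2_sum_finite(2)[of k f] L by auto
    also have "\<dots> \<le> (\<Sum>n<k. c n)" by (intro sum_mono c)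
    also have "\<dots> \<le> C" unfolding C_def by (rule sum_le_suminf[OF sc]) (auto simp: c0)
    finally show ?thesis .
  qed
  have C0: "0 \<le> C" using NS[of 0] L2norm_nonneg[of "S 0"] by linarith
  have lim: "(\<lambda>k. S k x) \<longlonglongrightarrow> (\<Sum>n. f n x)" for x unfolding S_def using summable_LIMSEQ[OF sf] .
  have Sm[measurable]: "S k \<in> borel_measurable borel" for k using L2_meas[OF LS] .
  have m[measurable]: "(\<lambda>x. \<Sum>n. f n x) \<in> borel_measurable borel"
    by (rule borel_measurable_LIMSEQ_real[OF lim]) simp
  have intS: "(\<integral>\<^sup>+x. ennreal ((S k x)^2) \<partial>lborel) = ennreal ((L2norm (S k))^2)" for k
    unfolding L2norm_sq using LS[of k] unfolding L2_def by (intro nn_integral_eq_integral) auto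
  have "(\<integral>\<^sup>+x. ennreal ((\<Sum>n. f n x)^2) \<partial>lborel) = (\<integral>\<^sup>+x. liminf (\<lambda>k. ennreal ((S k x)^2)) \<partial>lborel)"
  proof (rule nn_integral_cong)
    fix x
    have "(\<lambda>k. ennreal ((S k x)^2)) \<longlonglongrightarrow> ennreal ((\<Sum>n. f n x)^2)"
      by (intro tendsto_ennrealI tendsto_power lim)
    then have "liminf (\<lambda>k. ennreal ((S k x)^2)) = ennreal ((\<Sum>n. f n x)^2)"
      by (rule lim_imp_Liminf[rotated]) simp
    then show "ennreal ((\<Sum>n. f n x)^2) = liminf (\<lambda>k. ennreal ((S k x)^2))" by simp
  qed
  also have "\<dots> \<le> liminf (\<lambda>k. \<integral>\<^sup>+x. ennreal ((S k x)^2) \<partial>lborel)"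
    by (rule nn_integral_liminf) measurable
  also have "\<dots> \<le> limsup (\<lambda>k. \<integral>\<^sup>+x. ennreal ((S k x)^2) \<partial>lborel)"
    by (rule Liminf_le_Limsup) simp
  also have "\<dots> \<le> ennreal (C^2)"
  proof (rule Limsup_bounded, rule always_eventually, rule allI)
    fix k
    show "(\<integral>\<^sup>+x. ennreal ((S k x)^2) \<partial>lborel) \<le> ennreal (C^2)"
      unfolding intS using NS[of k] L2norm_nonneg[of "S k"]
      by (intro ennreal_leI power_mono) auto
  qed
  finally have le: "(\<integral>\<^sup>+x. ennreal ((\<Sum>n. f n x)^2) \<partial>lborel) \<le> ennreal (C^2)" .
  have int: "integrable lborel (\<lambda>x. (\<Sum>n. f n x)^2)"
  proof (rule integrableI_bounded)
    show "(\<lambda>x. (\<Sum>n. f n x)^2) \<in> borel_measurable lborel" by measurable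
    show "(\<integral>\<^sup>+x. ennreal (norm ((\<Sum>n. f n x)^2)) \<partial>lborel) < \<infinity>"
      using le by (simp add: le_less_trans)
  qed
  then show "L2 (\<lambda>x. \<Sum>n. f n x)" unfolding L2_def by simp
  have "integral\<^sup>L lborel (\<lambda>x. (\<Sum>n. f n x)^2) = enn2real (\<integral>\<^sup>+x. ennreal ((\<Sum>n. f n x)^2) \<partial>lborel)"
    by (rule integral_eq_nn_integral) auto
  also have "\<dots> \<le> C^2"
    using le by (intro enn2real_leI) auto
  finally have "(L2norm (\<lambda>x. \<Sum>n. f n x))^2 \<le> C^2" unfolding L2norm_sq .
  then show "L2norm (\<lambda>x. \<Sum>n. f n x) \<le> (\<Sum>n. c n)"
    unfolding C_def[symmetric] using C0 by (rule power2_le_imp_le)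
qed

lemma Aop_zero_AE:
  assumes Lf: "L2 f" and nn: "AE x in lborel. 0 \<le> f x" and z: "AE \<xi> in lborel. Aop m f \<xi> = 0"
    and m: "0 < m"
  shows "AE x in lborel. f x = 0"
proof -
  have [measurable]: "f \<in> borel_measurable borel" using L2_meas[OF Lf] .
  have [measurable]: "Aop m f \<in> borel_measurable borel" by (rule Aop_measurable) simp
  define fp where "fp = (\<lambda>x. max (f x) 0)"
  have [measurable]: "fp \<in> borel_measurable borel" unfolding fp_def by measurable
  let ?I = "{- real m / 2 .. real m / 2}"
  have eq: "ennreal (Aop m f \<xi>) = (\<integral>\<^sup>+s. ennreal (indicator ?I s * fp (\<xi> + s)) \<partial>lborel)" for \<xi>
  proof -
    have "AE s in lborel. 0 \<le> f (\<xi> + 1 * s)"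
      using nn by (intro AE_borel_affine) auto
    then have ae: "AE s in lborel. indicator ?I s * f (\<xi> + s) = indicator ?I s * fp (\<xi> + s)"
      by eventually_elim (auto simp: fp_def)
    have si: "set_integrable lborel ?I (\<lambda>s. f (\<xi> + s))"
      using L2_set_integrable[OF L2_shift(1)[OF Lf]] by blast
    then have i1: "integrable lborel (\<lambda>s. indicator ?I s * f (\<xi> + s))"
      unfolding set_integrable_def by simp
    have i2: "integrable lborel (\<lambda>s. indicator ?I s * fp (\<xi> + s))"
      by (rule integrable_cong_AE_imp[OF i1 _ ae]) measurable
    have "Aop m f \<xi> = integral\<^sup>L lborel (\<lambda>s. indicator ?I s * fp (\<xi> + s))"
      unfolding Aop_eq set_lebesgue_integral_def using ae by (simp add: integral_cong_AE)
    also have "ennreal \<dots> = (\<integral>\<^sup>+s. ennreal (indicator ?I s * fp (\<xi> + s)) \<partial>lborel)"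
      by (rule nn_integral_eq_integral[symmetric, OF i2]) (auto simp: fp_def)
    finally show ?thesis .
  qed
  have "(\<integral>\<^sup>+\<xi>. ennreal (Aop m f \<xi>) \<partial>lborel) = 0"
    using z by (subst nn_integral_0_iff_AE) (auto intro!: Aop_measurable)
  then have "ennreal (real m) * (\<integral>\<^sup>+x. ennreal (fp x) \<partial>lborel) = 0"
    unfolding eq using tonelli_shift[of fp "- real m / 2" "real m / 2"] by (simp add: fp_def)
  then have "(\<integral>\<^sup>+x. ennreal (fp x) \<partial>lborel) = 0" using m by simp
  then have "AE x in lborel. ennreal (fp x) = 0" by (subst (asm) nn_integral_0_iff_AE) auto
  then show ?thesis using nn by eventually_elim (auto simp: fp_def)
qed

lemma comp_measurable:
  fixes a b :: real and h :: "real \<Rightarrow> real" and u :: "real \<Rightarrow> real"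
  assumes "continuous_on {a..b} h" "a \<le> b" "\<And>x. u x \<in> {a..b}" "u \<in> borel_measurable borel"
  shows "(\<lambda>x. h (u x)) \<in> borel_measurable borel"
proof -
  define hh where "hh = (\<lambda>r. h (max a (min b r)))"
  have c: "continuous_on UNIV (\<lambda>x. max a (min b x))"
    by (intro continuous_intros)
  have sub: "(\<lambda>x. max a (min b x)) ` UNIV \<subseteq> {a..b}" using assms(2) by auto
  have "continuous_on UNIV hh" unfolding hh_def
    by (rule continuous_on_compose2[OF assms(1) c sub])
  then have [measurable]: "hh \<in> borel_measurable borel" by (simp add: borel_measurable_continuous_onI)
  have [measurable]: "u \<in> borel_measurable borel" by fact
  have e: "(\<lambda>x. h (u x)) = (\<lambda>x. hh (u x))"
  proof (rule ext)
    fix x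
    have "max a (min b (u x)) = u x" using assms(3)[of x] by auto
    then show "h (u x) = hh (u x)" unfolding hh_def by simp
  qed
  show ?thesis unfolding e by measurable
qed

context
  fixes dPhi :: "nat \<Rightarrow> nat \<Rightarrow> real \<Rightarrow> real" and \<nu> :: real
  assumes nu_pos: "\<nu> > 0"
    and dPhi_deriv: "\<And>m k x. m \<ge> 1 \<Longrightarrow> k < 4 \<Longrightarrow> x \<ge> 0 \<Longrightarrow>
          (dPhi m k has_real_derivative dPhi m (Suc k) x) (at x within {0..})"
    and signs: "\<And>m k x. m \<ge> 1 \<Longrightarrow> k \<le> 4 \<Longrightarrow> x \<ge> 0 \<Longrightarrow> (-1)^k * dPhi m k x \<ge> 0"
begin

lemma dPhi_at:
  assumes "m \<ge> 1" "k < 4" "x > 0"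
  shows "(dPhi m k has_real_derivative dPhi m (Suc k) x) (at x)"
proof -
  have "x \<in> interior {0..}" using assms(3) by simp
  then have "at x within {0..} = at x" by (rule at_within_interior)
  then show ?thesis using dPhi_deriv[OF assms(1,2), of x] assms(3) by simp
qed

lemma dPhi2_nonneg: "m \<ge> 1 \<Longrightarrow> x \<ge> 0 \<Longrightarrow> 0 \<le> dPhi m 2 x"
  using signs[of m 2 x] by simp

lemma dPhi3_nonpos: "m \<ge> 1 \<Longrightarrow> x \<ge> 0 \<Longrightarrow> dPhi m 3 x \<le> 0"
  using signs[of m 3 x] by simp

lemma dPhi2_mono:
  assumes "m \<ge> 1" "0 < a" "a \<le> b"
  shows "dPhi m 2 b \<le> dPhi m 2 a"
proof (rule DERIV_nonpos_imp_nonincreasing[OF assms(3)])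
  fix x assume x: "a \<le> x" "x \<le> b"
  then show "\<exists>y. DERIV (dPhi m 2) x :> y \<and> y \<le> 0"
    using dPhi_at[OF assms(1), of 2 x] dPhi3_nonpos[OF assms(1), of x] assms(2)
    by (intro exI[of _ "dPhi m 3 x"]) (simp add: numeral_3_eq_3 numeral_2_eq_2)
qed

lemma dPsi_deriv_within:
  assumes m: "m \<ge> 1" and r: "r \<in> {0..\<nu> * real m}"
  shows "(dPsi dPhi \<nu> m has_real_derivative dPhi m 2 (\<nu> * real m - r)) (at r within {0..\<nu> * real m})"
proof -
  define g where "g = (\<lambda>r. \<nu> * real m - r)"
  have gd: "(g has_real_derivative -1) (at r within {0..\<nu> * real m})"
    unfolding g_def by (auto intro!: derivative_eq_intros)
  have gr: "g r \<ge> 0" using r unfolding g_def by simp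
  have sub: "g ` {0..\<nu> * real m} \<subseteq> {0..}" unfolding g_def by auto
  have "(dPhi m 1 has_real_derivative dPhi m 2 (g r)) (at (g r) within {0..})"
    using dPhi_deriv[OF m, of 1 "g r"] gr by (simp add: numeral_2_eq_2)
  then have "(dPhi m 1 has_real_derivative dPhi m 2 (g r)) (at (g r) within (g ` {0..\<nu> * real m}))"
    by (rule DERIV_subset) (rule sub)
  from DERIV_image_chain[OF this gd]
  have "((\<lambda>r. dPhi m 1 (g r)) has_real_derivative dPhi m 2 (g r) * -1) (at r within {0..\<nu> * real m})"
    by (simp add: o_def)
  then have "((\<lambda>r. dPhi m 1 (\<nu> * real m) - dPhi m 1 (g r)) has_real_derivative 0 - dPhi m 2 (g r) * -1) (at r within {0..\<nu> * real m})"
    by (intro DERIV_diff DERIV_const)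
  then show ?thesis unfolding dPsi_def[abs_def] g_def by simp
qed

lemma dPsi_deriv_at:
  assumes m: "m \<ge> 1" and r: "r < \<nu> * real m"
  shows "(dPsi dPhi \<nu> m has_real_derivative dPhi m 2 (\<nu> * real m - r)) (at r)"
proof -
  have "(dPhi m 1 has_real_derivative dPhi m 2 (\<nu> * real m - r)) (at (\<nu> * real m - r))"
    using dPhi_at[OF m, of 1 "\<nu> * real m - r"] r by (simp add: numeral_2_eq_2)
  moreover have g: "((\<lambda>r. \<nu> * real m - r) has_real_derivative -1) (at r)" by (auto intro!: derivative_eq_intros)
  ultimately have "((\<lambda>r. dPhi m 1 (\<nu> * real m - r)) has_real_derivative dPhi m 2 (\<nu> * real m - r) * -1) (at r)"
    using DERIV_chain2[where f="dPhi m 1" and g="\<lambda>r. \<nu> * real m - r" and x=r and s=UNIV and Da="dPhi m 2 (\<nu> * real m - r)" and Db="-1"]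
    by simp
  then have "((\<lambda>r. dPhi m 1 (\<nu> * real m) - dPhi m 1 (\<nu> * real m - r)) has_real_derivative 0 - dPhi m 2 (\<nu> * real m - r) * -1) (at r)"
    by (intro DERIV_diff DERIV_const)
  then show ?thesis unfolding dPsi_def[abs_def] by simp
qed

lemma dPsi_cont: "m \<ge> 1 \<Longrightarrow> continuous_on {0..\<nu> * real m} (dPsi dPhi \<nu> m)"
  by (rule DERIV_continuous_on[OF dPsi_deriv_within])

lemma dPhi2_cont:
  assumes m: "m \<ge> 1"
  shows "continuous_on {0..\<nu> * real m} (\<lambda>r. dPhi m 2 (\<nu> * real m - r))"
proof -
  have "continuous_on {0..} (dPhi m 2)"
    by (rule DERIV_continuous_on[of _ _ "dPhi m 3"]) (use dPhi_deriv[OF m, of 2] in \<open>auto simp: numeral_3_eq_3 numeral_2_eq_2\<close>)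
  then show ?thesis
    by (rule continuous_on_compose2) (auto intro!: continuous_intros)
qed

lemma dPsi0: "dPsi dPhi \<nu> m 0 = 0" unfolding dPsi_def by simp

lemma dPsi_bounds:
  assumes m: "m \<ge> 1" and rho: "0 \<le> \<rho>" "\<rho> < \<nu> * real m" and r: "r \<in> {0..\<rho>}"
  shows "0 \<le> dPsi dPhi \<nu> m r" "dPsi dPhi \<nu> m r \<le> dPhi m 2 (\<nu> * real m - \<rho>) * r"
proof -
  have d: "(dPsi dPhi \<nu> m has_real_derivative dPhi m 2 (\<nu> * real m - x)) (at x)" if "x \<in> {0..\<rho>}" for x
    using dPsi_deriv_at[OF m, of x] that rho by auto
  have "dPsi dPhi \<nu> m 0 \<le> dPsi dPhi \<nu> m r"
  proof (rule DERIV_nonneg_imp_nondecreasing[of 0 r])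
    fix x assume "0 \<le> x" "x \<le> r"
    then have x: "x \<in> {0..\<rho>}" using r by auto
    then show "\<exists>y. DERIV (dPsi dPhi \<nu> m) x :> y \<and> 0 \<le> y"
      using d[OF x] dPhi2_nonneg[OF m, of "\<nu> * real m - x"] rho by (intro exI[of _ "dPhi m 2 (\<nu> * real m - x)"]) auto
  qed (use r in simp)
  then show "0 \<le> dPsi dPhi \<nu> m r" by (simp add: dPsi0)
  have "\<bar>dPsi dPhi \<nu> m r - dPsi dPhi \<nu> m 0\<bar> \<le> dPhi m 2 (\<nu> * real m - \<rho>) * \<bar>r - 0\<bar>"
  proof (rule lip_interval[of 0 \<rho> _ "\<lambda>x. dPhi m 2 (\<nu> * real m - x)"])
    fix x assume x: "x \<in> {0..\<rho>}"
    show "(dPsi dPhi \<nu> m has_real_derivative dPhi m 2 (\<nu> * real m - x)) (at x within {0..\<rho>})"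
      using d[OF x] by (rule has_field_derivative_at_within)
    have "dPhi m 2 (\<nu> * real m - x) \<le> dPhi m 2 (\<nu> * real m - \<rho>)"
      by (rule dPhi2_mono[OF m]) (use x rho in auto)
    moreover have "0 \<le> dPhi m 2 (\<nu> * real m - x)" by (rule dPhi2_nonneg[OF m]) (use x rho in auto)
    ultimately show "\<bar>dPhi m 2 (\<nu> * real m - x)\<bar> \<le> dPhi m 2 (\<nu> * real m - \<rho>)" by simp
  qed (use r rho in auto)
  then show "dPsi dPhi \<nu> m r \<le> dPhi m 2 (\<nu> * real m - \<rho>) * r" using r by (simp add: dPsi0)
qed

end

theorem lemma2p6:
  fixes Phi :: "nat \<Rightarrow> real \<Rightarrow> real"
    and dPhi :: "nat \<Rightarrow> nat \<Rightarrow> real \<Rightarrow> real"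
    and \<nu> K \<gamma> :: real
    and W :: "real \<Rightarrow> real"
  assumes nu_pos: "\<nu> > 0"
    and K_pos: "0 < K" and K_bound: "K < \<nu>^2 / 2"
    and dPhi0: "\<And>m x. m \<ge> 1 \<Longrightarrow> x \<ge> 0 \<Longrightarrow> dPhi m 0 x = Phi m x"
    and dPhi_deriv: "\<And>m k x. m \<ge> 1 \<Longrightarrow> k < 4 \<Longrightarrow> x \<ge> 0 \<Longrightarrow>
          (dPhi m k has_real_derivative dPhi m (Suc k) x) (at x within {0..})"
    and dPhi_cont: "\<And>m. m \<ge> 1 \<Longrightarrow> continuous_on {0..} (dPhi m 4)"
    and signs: "\<And>m k x. m \<ge> 1 \<Longrightarrow> k \<le> 4 \<Longrightarrow> x \<ge> 0 \<Longrightarrow> (-1)^k * dPhi m k x \<ge> 0"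
    and signs_strict: "\<And>k s. k \<le> 4 \<Longrightarrow> s > 0 \<Longrightarrow> (-1)^k * dPhi 1 k s > 0"
    and gamma: "5/2 < \<gamma>" "\<gamma> < 3"
    and sum1: "summable (\<lambda>m. dPhi m 1 (\<nu> * real m - sqrt (2 * K * real m)) * real m)"
    and sum2: "summable (\<lambda>m. dPhi m 2 (\<nu> * real m - sqrt (2 * K * real m)) * real m ^ 2)"
    and sum3: "summable (\<lambda>m. dPhi m 2 (\<nu> * real m) * real m powr \<gamma>)"
    and sum4: "summable (\<lambda>m. dPhi m 3 (\<nu> * real m - sqrt (2 * K * real m)) * real m powr (3/2))"
    and W: "W \<in> coneK K"
  shows "Top dPhi \<nu> W \<in> coneK K"
proof -
  have Wc: "W \<in> cone" and hK: "(1/2) * (L2norm W)^2 = K" using W unfolding coneK_def by auto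
  define NW where "NW = L2norm W"
  have NW0: "0 \<le> NW" unfolding NW_def by (rule L2norm_nonneg)
  have NW2: "NW^2 = 2 * K" using hK unfolding NW_def by simp
  have NWpos: "0 < NW" using NW2 K_pos NW0 by (cases "NW = 0") auto
  have NWs: "NW = sqrt (2 * K)" using NW2 NW0 by (metis real_sqrt_abs abs_of_nonneg)
  have LW: "L2 W" using cone_L2[OF Wc] .
  have [measurable]: "W \<in> borel_measurable borel" using L2_meas[OF LW] .
  have rho_eq: "sqrt (real m) * NW = sqrt (2 * K * real m)" for m :: nat
    unfolding NWs by (simp add: real_sqrt_mult mult.commute)
  have rho_lt: "sqrt (real m) * NW < \<nu> * real m" if m: "m \<ge> 1" for m :: nat
  proof -
    have m1: "1 \<le> real m" using m by simp
    have "2 * K * real m < \<nu>^2 * real m" using K_bound m1 by (simp add: mult_strict_right_mono)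
    also have "\<dots> \<le> \<nu>^2 * (real m * real m)"
      using m1 by (intro mult_left_mono) (auto simp: mult_le_cancel_left1)
    also have "\<dots> = (\<nu> * real m)^2" by (simp add: power2_eq_square)
    finally have "sqrt (2 * K * real m) < sqrt ((\<nu> * real m)^2)" by (rule real_sqrt_less_mono)
    then show ?thesis unfolding rho_eq using nu_pos m1 by simp
  qed
  have rho0: "0 \<le> sqrt (real m) * NW" for m :: nat using NW0 by simp
  define g where "g m = (\<lambda>x. dPsi dPhi \<nu> m (Aop m W x))" for m
  define T where "T n = Aop (Suc n) (g (Suc n))" for n
  define Lm where "Lm m = dPhi m 2 (\<nu> * real m - sqrt (2 * K * real m))" for m
  define c where "c n = real (Suc n) * real (Suc n) * Lm (Suc n) * NW" for n
  have AWr: "Aop m W x \<in> {0 .. sqrt (real m) * NW}" for m x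
    using cone_Aop_nonneg[OF Wc, of m x] Aop_bound[OF LW, of m x] unfolding NW_def by auto
  have Lm0: "0 \<le> Lm m" if m: "m \<ge> 1" for m
    unfolding Lm_def using dPhi2_nonneg[where dPhi=dPhi and \<nu>=\<nu>, OF nu_pos dPhi_deriv signs m] rho_lt[OF m] unfolding rho_eq by simp
  have gb: "0 \<le> g m x \<and> g m x \<le> Lm m * Aop m W x" if m: "m \<ge> 1" for m x
    using dPsi_bounds[where dPhi=dPhi and \<nu>=\<nu>, OF nu_pos dPhi_deriv signs m rho0 rho_lt[OF m] AWr[of m x]]
    unfolding g_def Lm_def rho_eq by (simp add: mult.commute)
  have gm: "g m \<in> borel_measurable borel" if m: "m \<ge> 1" for m
    unfolding g_def
  proof (rule comp_measurable[OF dPsi_cont[where dPhi=dPhi and \<nu>=\<nu>, OF nu_pos dPhi_deriv signs m]])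
    show "0 \<le> \<nu> * real m" using nu_pos by simp
    show "Aop m W x \<in> {0..\<nu> * real m}" for x using AWr[of m x] rho_lt[OF m] by auto
    show "Aop m W \<in> borel_measurable borel" by (rule Aop_measurable) simp
  qed
  have Lg: "L2 (g m) \<and> L2norm (g m) \<le> Lm m * (real m * NW)" if m: "m \<ge> 1" for m
  proof -
    have L: "L2 (\<lambda>x. Lm m * Aop m W x)" using L2_cmult[OF Aop_L2(1)[OF LW]] .
    have b1: "\<bar>g m x\<bar> \<le> \<bar>Lm m * Aop m W x\<bar>" for x
      using gb[OF m, of x] by linarith
    have b: "AE x in lborel. \<bar>g m x\<bar> \<le> \<bar>Lm m * Aop m W x\<bar>" using b1 by simp
    have gm': "g m \<in> borel_measurable lborel" using gm[OF m] by simp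
    have "L2norm (g m) \<le> L2norm (\<lambda>x. Lm m * Aop m W x)" using L2norm_mono(2)[OF gm' L b] .
    also have "\<dots> = Lm m * L2norm (Aop m W)" using Lm0[OF m] by (simp add: L2norm_cmult)
    also have "\<dots> \<le> Lm m * (real m * NW)"
      using Aop_L2(2)[OF LW, of m] Lm0[OF m] unfolding NW_def by (intro mult_left_mono) auto
    finally show ?thesis using L2norm_mono(1)[OF gm' L b] by simp
  qed
  have Tcone: "T n \<in> cone" for n
  proof -
    have m: "Suc n \<ge> 1" by simp
    show ?thesis unfolding T_def g_def
    proof (rule comp_cone[OF Wc])
      show "0 < Suc n" by simp
      show "sqrt (real (Suc n)) * L2norm W < \<nu> * real (Suc n)" using rho_lt[OF m] unfolding NW_def .
      show "dPsi dPhi \<nu> (Suc n) 0 = 0" by (simp add: dPsi_def)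
      show "(dPsi dPhi \<nu> (Suc n) has_real_derivative dPhi (Suc n) 2 (\<nu> * real (Suc n) - r)) (at r within {0..\<nu> * real (Suc n)})"
        if "r \<in> {0..\<nu> * real (Suc n)}" for r
        by (rule dPsi_deriv_within[where dPhi=dPhi and \<nu>=\<nu>, OF nu_pos dPhi_deriv signs m that])
      show "continuous_on {0..\<nu> * real (Suc n)} (\<lambda>r. dPhi (Suc n) 2 (\<nu> * real (Suc n) - r))"
        by (rule dPhi2_cont[where dPhi=dPhi and \<nu>=\<nu>, OF nu_pos dPhi_deriv signs m])
      show "0 \<le> dPhi (Suc n) 2 (\<nu> * real (Suc n) - r)" if "r \<in> {0..\<nu> * real (Suc n)}" for r
        by (rule dPhi2_nonneg[where dPhi=dPhi and \<nu>=\<nu>, OF nu_pos dPhi_deriv signs m]) (use that in auto)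
    qed
  qed
  have LT: "L2 (T n) \<and> L2norm (T n) \<le> c n" for n
  proof -
    have m: "Suc n \<ge> 1" by simp
    have "L2norm (T n) \<le> real (Suc n) * L2norm (g (Suc n))"
      unfolding T_def using Aop_L2(2) Lg[OF m] by blast
    also have "\<dots> \<le> real (Suc n) * (Lm (Suc n) * (real (Suc n) * NW))"
      using Lg[OF m] by (intro mult_left_mono) auto
    also have "\<dots> = c n" unfolding c_def by (simp add: algebra_simps)
    finally show ?thesis unfolding T_def using Aop_L2(1) Lg[OF m] by blast
  qed
  have Tnn: "0 \<le> T n x" for n x
    unfolding T_def by (rule Aop_nonneg) (use gb in auto)
  have Tle: "T n x \<le> c n" for n x
  proof -
    have m: "Suc n \<ge> 1" by simp
    have B: "\<bar>g (Suc n) y\<bar> \<le> Lm (Suc n) * (sqrt (real (Suc n)) * NW)" for y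
    proof -
      have "\<bar>g (Suc n) y\<bar> \<le> Lm (Suc n) * Aop (Suc n) W y" using gb[OF m, of y] by simp
      also have "\<dots> \<le> Lm (Suc n) * (sqrt (real (Suc n)) * NW)"
        using AWr[of "Suc n" y] Lm0[OF m] by (intro mult_left_mono) auto
      finally show ?thesis .
    qed
    have "T n x \<le> real (Suc n) * (Lm (Suc n) * (sqrt (real (Suc n)) * NW))"
      using Aop_abs_bound[OF B gm[OF m], of "Suc n" x] unfolding T_def by simp
    also have "\<dots> \<le> real (Suc n) * (Lm (Suc n) * (real (Suc n) * NW))"
    proof -
      have "sqrt (real (Suc n)) \<le> real (Suc n)"
        using real_sqrt_le_mono[of "real (Suc n)" "(real (Suc n))^2"]
        by (simp add: power2_eq_square)
      then show ?thesis using Lm0[OF m] NW0 by (intro mult_left_mono mult_right_mono) auto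
    qed
    also have "\<dots> = c n" unfolding c_def by (simp add: algebra_simps)
    finally show ?thesis .
  qed
  have sc: "summable c"
  proof -
    have "summable (\<lambda>n. dPhi (Suc n) 2 (\<nu> * real (Suc n) - sqrt (2 * K * real (Suc n))) * real (Suc n) ^ 2)"
      using sum2 by (subst summable_Suc_iff)
    then have "summable (\<lambda>n. dPhi (Suc n) 2 (\<nu> * real (Suc n) - sqrt (2 * K * real (Suc n))) * real (Suc n) ^ 2 * NW)"
      by (rule summable_mult2)
    moreover have "c = (\<lambda>n. dPhi (Suc n) 2 (\<nu> * real (Suc n) - sqrt (2 * K * real (Suc n))) * real (Suc n) ^ 2 * NW)"
      unfolding c_def Lm_def by (rule ext) (simp only: power2_eq_square mult_ac)
    ultimately show ?thesis by (simp only:)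
  qed
  have sT: "summable (\<lambda>n. T n x)" for x
    by (rule summable_comparison_test'[OF sc, of 0]) (use Tnn Tle in simp)
  have dPeq: "dP dPhi \<nu> W = (\<lambda>x. \<Sum>n. T n x)"
    unfolding dP_def T_def g_def by simp
  have LT1: "L2 (T n)" for n using LT by blast
  have LT2: "L2norm (T n) \<le> c n" for n using LT by blast
  have LdP: "L2 (dP dPhi \<nu> W)" unfolding dPeq by (rule L2_series(1)[OF LT1 LT2 sc sT])
  have dPcone: "dP dPhi \<nu> W \<in> cone"
  proof (rule cone_closed[OF LdP])
    fix e :: real assume e: "e > 0"
    obtain M where M: "\<And>n. n \<ge> M \<Longrightarrow> norm (\<Sum>i. c (i + n)) < e"
      using suminf_exist_split[OF e sc] by blast
    define k where "k = (\<lambda>x. \<Sum>n\<in>{..<M}. T n x)"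
    have kc: "k \<in> cone" unfolding k_def by (rule cone_sum) (rule Tcone)
    have split: "(\<Sum>n. T n x) = (\<Sum>i. T (i + M) x) + (\<Sum>i<M. T i x)" for x
      by (rule suminf_split_initial_segment[OF sT])
    have "L2norm (\<lambda>x. k x - dP dPhi \<nu> W x) = L2norm (\<lambda>x. dP dPhi \<nu> W x - k x)"
      by (rule L2norm_diff_commute)
    also have "(\<lambda>x. dP dPhi \<nu> W x - k x) = (\<lambda>x. \<Sum>i. T (i + M) x)"
      unfolding dPeq k_def using split by auto
    also have "L2norm (\<lambda>x. \<Sum>i. T (i + M) x) \<le> (\<Sum>i. c (i + M))"
      by (rule L2_series(2)[where c="\<lambda>i. c (i + M)"])
         (use LT1 LT2 summable_ignore_initial_segment[OF sc] summable_ignore_initial_segment[OF sT] in auto)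
    also have "\<dots> < e" using M[of M] by simp
    finally show "\<exists>k\<in>cone. L2norm (\<lambda>x. k x - dP dPhi \<nu> W x) < e" using kc by blast
  qed
  have NdP: "0 < L2norm (dP dPhi \<nu> W)"
  proof (rule ccontr)
    assume "\<not> 0 < L2norm (dP dPhi \<nu> W)"
    then have "L2norm (dP dPhi \<nu> W) = 0" using L2norm_nonneg[of "dP dPhi \<nu> W"] by simp
    then have z: "AE x in lborel. dP dPhi \<nu> W x = 0" using L2norm_eq_0[OF LdP] by blast
    have T0le: "T 0 x \<le> dP dPhi \<nu> W x" for x
      using sum_le_suminf[OF sT, of "{0}" x] Tnn unfolding dPeq by auto
    have zT: "AE x in lborel. Aop 1 (g 1) x = 0"
      using z
    proof eventually_elim
      case (elim x)
      then show ?case using T0le[of x] Tnn[of 0 x] unfolding T_def by simp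
    qed
    have m1: "(1::nat) \<ge> 1" by simp
    have zg: "AE x in lborel. g 1 x = 0"
      by (rule Aop_zero_AE[OF conjunct1[OF Lg[OF m1]] _ zT]) (use gb[OF m1] in auto)
    have zA: "AE x in lborel. Aop 1 W x = 0"
      using zg
    proof eventually_elim
      case (elim x)
      show ?case
      proof (rule ccontr)
        assume ne: "Aop 1 W x \<noteq> 0"
        define r where "r = Aop 1 W x"
        have r: "0 < r" "r \<le> sqrt 1 * NW" using AWr[of 1 x] ne unfolding r_def by auto
        have rl: "r < \<nu>" using r(2) rho_lt[OF m1] by simp
        have "dPhi 1 1 (\<nu> - r) < dPhi 1 1 \<nu>"
        proof (rule DERIV_pos_imp_increasing[of "\<nu> - r" \<nu>])
          fix y assume y: "\<nu> - r \<le> y" "y \<le> \<nu>"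
          then have y0: "0 < y" using rl by simp
          show "\<exists>d. DERIV (dPhi 1 1) y :> d \<and> 0 < d"
            using dPhi_at[where dPhi=dPhi and \<nu>=\<nu>, OF nu_pos dPhi_deriv signs m1, of 1 y] y0 signs_strict[of 2 y]
            by (intro exI[of _ "dPhi 1 2 y"]) (simp add: numeral_2_eq_2)
        qed (use r in simp)
        then have "0 < g 1 x" unfolding g_def dPsi_def r_def by simp
        then show False using elim by simp
      qed
    qed
    have "AE x in lborel. W x = 0"
      by (rule Aop_zero_AE[OF LW cone_nonneg[OF Wc] zA]) simp
    then have "L2norm W = L2norm (\<lambda>x. 0)"
      by (rule L2norm_AE_cong) auto
    then have "NW = 0" unfolding NW_def by (simp add: L2norm_def)
    then show False using NWpos by simp
  qed
  define mu where "mu = muW dPhi \<nu> W"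
  have mu: "mu = NW / L2norm (dP dPhi \<nu> W)" unfolding mu_def muW_def NW_def ..
  have mu0: "0 \<le> mu" unfolding mu using NW0 NdP by simp
  have Teq: "Top dPhi \<nu> W = (\<lambda>x. mu * dP dPhi \<nu> W x)" unfolding Top_def mu_def ..
  have "Top dPhi \<nu> W \<in> cone" unfolding Teq by (rule cone_cmult[OF dPcone mu0])
  moreover have "L2norm (Top dPhi \<nu> W) = NW"
    unfolding Teq L2norm_cmult using mu0 NdP NW0 unfolding mu by simp
  ultimately show ?thesis unfolding coneK_def using hK unfolding NW_def by simp
qed

end
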